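(* Let $f\in L_{2\pi}$ be complex valued with Fourier coefficients $\hat f(k)=\frac1{2\pi}\int_{-\pi}^{\pi}f(x)e^{-ikx}dx$, and let $\{\psi_n\}_{n\ge1}$ be a decreasing sequence of positive numbers tending to zero with $\psi_n=O(\psi_{2n})$. Suppose $\{\hat f(n)\}_{n\ge0}\in NBVS$ and $\{\hat f(-n)\}_{n\ge0}\in NBVS$, and let $S_n(f,x)=\sum_{k=-n}^n\hat f(k)e^{ikx}$. Then $$\|f-S_n(f)\|_L=O(\psi_n)\quad(n\to\infty)$$ if and only if both $E_n(f)_L=O(\psi_n)$ as $n\to\infty$ and $\hat f(n)\log|n|=O(\psi_{|n|})$ as $|n|\to\infty$.
   Context: For $\theta_0\in[0,\pi/2)$ let $M(\theta_0)=\{z\in\mathbb C: |\arg z|\le\theta_0\}$ (with $0\in M(\theta_0)$). Write $\Delta c_n=c_n-c_{n+1}$. A complex sequence $\mathbf C=\{c_n\}$ belongs to $NBVS$ if there is $\theta_0\in[0,\pi/2)$ with $c_n\in M(\theta_0)$ for all $n\ge1$ and a constant $K(\mathbf C)>0$ such that $\sum_{n=m}^{2m}|\Delta c_n|\le K(\mathbf C)\big(|c_m|+|c_{2m}|\big)$ for all $m\ge1$. $L_{2\pi}$ is the space of complex valued $2\pi$-periodic integrable functions with norm $\|g\|_L=\int_{-\pi}^{\pi}|g(x)|dx$, and $E_n(f)_L=\inf_{a_k\in\mathbb C}\|f-\sum_{k=-n}^na_ke^{ikx}\|_L$. *)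

theory Defs
  imports "HOL-Analysis.Analysis" "HOL-Library.Landau_Symbols"
begin

definition sector :: "real \<Rightarrow> complex set" where
  "sector \<theta>0 = {z. z = 0 \<or> \<bar>Arg z\<bar> \<le> \<theta>0}"

definition NBVS :: "(nat \<Rightarrow> complex) \<Rightarrow> bool" where
  "NBVS c \<longleftrightarrow>
     (\<exists>\<theta>0. 0 \<le> \<theta>0 \<and> \<theta>0 < pi / 2 \<and> (\<forall>n\<ge>1. c n \<in> sector \<theta>0)) \<and>
     (\<exists>K>0. \<forall>m\<ge>1. (\<Sum>n=m..2*m. norm (c n - c (Suc n))) \<le> K * (norm (c m) + norm (c (2*m))))"

definition L_norm :: "(real \<Rightarrow> complex) \<Rightarrow> real" where
  "L_norm g = integral {-pi..pi} (\<lambda>x. norm (g x))"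

definition in_L2pi :: "(real \<Rightarrow> complex) \<Rightarrow> bool" where
  "in_L2pi f \<longleftrightarrow> (\<forall>x. f (x + 2 * pi) = f x) \<and> f absolutely_integrable_on {-pi..pi}"

definition fourier_coeff :: "(real \<Rightarrow> complex) \<Rightarrow> int \<Rightarrow> complex" where
  "fourier_coeff f k = integral {-pi..pi} (\<lambda>x. f x * exp (- \<i> * of_int k * of_real x)) / (2 * pi)"

definition partial_sum :: "(real \<Rightarrow> complex) \<Rightarrow> nat \<Rightarrow> real \<Rightarrow> complex" where
  "partial_sum f n x = (\<Sum>k=-int n..int n. fourier_coeff f k * exp (\<i> * of_int k * of_real x))"

definition best_approx :: "(real \<Rightarrow> complex) \<Rightarrow> nat \<Rightarrow> real" where
  "best_approx f n = (INF a\<in>(UNIV :: (int \<Rightarrow> complex) set).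
      L_norm (\<lambda>x. f x - (\<Sum>k=-int n..int n. a k * exp (\<i> * of_int k * of_real x))))"

end

theory Submission
  imports Defs
begin

definition ee :: "int \<Rightarrow> real \<Rightarrow> complex" where
  "ee k x = exp (\<i> * of_int k * of_real x)"

lemma ee_cont[continuous_intros]: "continuous_on A (ee k)"
  unfolding ee_def by (intro continuous_intros)

lemma norm_ee[simp]: "norm (ee k x) = 1"
  unfolding ee_def by (simp add: norm_exp_i_times[of "of_int k * x", simplified] mult.assoc)

lemma ee_mult: "ee k x * ee j x = ee (k + j) x"
  unfolding ee_def by (simp add: exp_add[symmetric] algebra_simps)

lemma ee_neg: "exp (- \<i> * of_int k * of_real x) = ee (-k) x"
  unfolding ee_def by simp

lemma ee_0[simp]: "ee 0 x = 1"
  unfolding ee_def by simp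

lemma ee_pi: "ee k pi = ee k (-pi)"
proof -
  define a where "a = \<i> * of_int k * of_real pi"
  have "ee k pi = exp a" "ee k (-pi) = exp (-a)" unfolding ee_def a_def by simp_all
  moreover have "exp a = exp (-a) * exp (2 * a)"
  proof -
    have "exp (-a) * exp (2 * a) = exp (-a + 2 * a)" by (rule exp_add[symmetric])
    also have "-a + 2 * a = a" by simp
    finally show ?thesis by simp
  qed
  moreover have "2 * a = (2 * of_int k * pi) * \<i>" unfolding a_def by simp
  ultimately have "ee k pi = ee k (-pi) * exp ((2 * of_int k * pi) * \<i>)" by simp
  also have "exp ((2 * of_int k * pi) * \<i>) = 1"
    using exp_integer_2pi[of "of_int k"] by simp
  finally show ?thesis by simp
qed

lemma integral_ee: "integral {-pi..pi} (ee k) = (if k = 0 then 2 * pi else 0)"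
proof (cases "k = 0")
  case True
  have "ee 0 = (\<lambda>_. 1)" by (rule ext) simp
  then show ?thesis using True by (simp add: scaleR_conv_of_real)
next
  case False
  have "((ee k) has_integral ((\<lambda>x. ee k x / (\<i> * of_int k)) pi - (\<lambda>x. ee k x / (\<i> * of_int k)) (-pi))) {-pi..pi}"
  proof (rule fundamental_theorem_of_calculus)
    fix x assume "x \<in> {-pi..pi}"
    show "((\<lambda>x. ee k x / (\<i> * of_int k)) has_vector_derivative ee k x) (at x within {-pi..pi})"
    proof -
      have "((\<lambda>z. exp (\<i> * of_int k * z) / (\<i> * of_int k)) has_field_derivative exp (\<i> * of_int k * of_real x)) (at (of_real x))"
        using False by (auto intro!: derivative_eq_intros)
      from has_vector_derivative_real_field[OF this] show ?thesis unfolding ee_def .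
    qed
  qed simp
  then show ?thesis using False ee_pi[of k] by (simp add: integral_unique)
qed

lemma ee_integrable: "ee k integrable_on {-pi..pi}"
  by (intro integrable_continuous_interval ee_cont)

lemma absint_mult_cont:
  fixes f h :: "real \<Rightarrow> complex"
  assumes f: "f absolutely_integrable_on {-pi..pi}" and h: "continuous_on {-pi..pi} h"
  shows "(\<lambda>x. f x * h x) absolutely_integrable_on {-pi..pi}"
proof -
  have "(\<lambda>x. h x * f x) absolutely_integrable_on {-pi..pi}"
    apply (rule absolutely_integrable_bounded_measurable_product[OF bilinear_times])
    using h f by (auto intro!: continuous_imp_measurable_on_sets_lebesgue compact_imp_bounded compact_continuous_image)
  then show ?thesis by (simp add: mult.commute)
qed


lemma fc_ee: "fourier_coeff f k = integral {-pi..pi} (\<lambda>x. f x * ee (-k) x) / (2 * pi)"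
  unfolding fourier_coeff_def ee_def by simp

lemma absint_integrable: "(f::real\<Rightarrow>complex) absolutely_integrable_on S \<Longrightarrow> f integrable_on S"
  by (rule set_lebesgue_integral_eq_integral(1))

lemma absint_norm_integrable: "(f::real\<Rightarrow>complex) absolutely_integrable_on S \<Longrightarrow> (\<lambda>x. norm (f x)) integrable_on S"
  unfolding absolutely_integrable_on_def by (elim conjE)

lemma mult_ee_integrable:
  "f absolutely_integrable_on {-pi..pi} \<Longrightarrow> (\<lambda>x. f x * ee j x) integrable_on {-pi..pi}"
  by (rule absint_integrable, rule absint_mult_cont, assumption, rule ee_cont)

lemma fc_diff:
  assumes "f absolutely_integrable_on {-pi..pi}" "g absolutely_integrable_on {-pi..pi}"
  shows "fourier_coeff (\<lambda>x. f x - g x) k = fourier_coeff f k - fourier_coeff g k"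
proof -
  have "integral {-pi..pi} (\<lambda>x. (f x - g x) * ee (-k) x) =
        integral {-pi..pi} (\<lambda>x. f x * ee (-k) x - g x * ee (-k) x)"
    by (simp add: algebra_simps)
  also have "\<dots> = integral {-pi..pi} (\<lambda>x. f x * ee (-k) x) - integral {-pi..pi} (\<lambda>x. g x * ee (-k) x)"
    by (intro integral_diff mult_ee_integrable assms)
  finally show ?thesis unfolding fc_ee by (simp add: diff_divide_distrib)
qed

definition tp :: "(int \<Rightarrow> complex) \<Rightarrow> int set \<Rightarrow> real \<Rightarrow> complex" where
  "tp a A x = (\<Sum>k\<in>A. a k * ee k x)"

lemma tp_cont[continuous_intros]: "continuous_on S (tp a A)"
  unfolding tp_def by (intro continuous_intros)

lemma tp_absint: "tp a A absolutely_integrable_on {-pi..pi}"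
  by (intro absolutely_integrable_continuous_real tp_cont)

lemma tp_integrable: "tp a A integrable_on {-pi..pi}"
  by (intro absint_integrable tp_absint)

lemma partial_sum_tp: "partial_sum f n = tp (fourier_coeff f) {-int n..int n}"
  unfolding partial_sum_def tp_def ee_def by (rule ext) simp

lemma pairing:
  assumes g: "g absolutely_integrable_on {-pi..pi}" and A: "finite A"
  shows "integral {-pi..pi} (\<lambda>x. g x * tp b A x) = 2 * pi * (\<Sum>k\<in>A. b k * fourier_coeff g (-k))"
proof -
  have "integral {-pi..pi} (\<lambda>x. g x * tp b A x) = integral {-pi..pi} (\<lambda>x. \<Sum>k\<in>A. b k * (g x * ee k x))"
    unfolding tp_def by (simp add: sum_distrib_left algebra_simps)
  also have "\<dots> = (\<Sum>k\<in>A. integral {-pi..pi} (\<lambda>x. b k * (g x * ee k x)))"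
    using A by (intro integral_sum A integrable_on_mult_right mult_ee_integrable[OF g])
  also have "\<dots> = (\<Sum>k\<in>A. b k * integral {-pi..pi} (\<lambda>x. g x * ee k x))"
    by (intro sum.cong refl integral_mult_right)
  also have "\<dots> = 2 * pi * (\<Sum>k\<in>A. b k * fourier_coeff g (-k))"
    unfolding fc_ee by (simp add: sum_distrib_left)
  finally show ?thesis .
qed

lemma fc_tp:
  assumes A: "finite A"
  shows "fourier_coeff (tp a A) j = (if j \<in> A then a j else 0)"
proof -
  have "integral {-pi..pi} (\<lambda>x. tp a A x * ee (-j) x) = integral {-pi..pi} (\<lambda>x. \<Sum>k\<in>A. a k * ee (k - j) x)"
    unfolding tp_def by (simp add: sum_distrib_right mult.assoc ee_mult)
  also have "\<dots> = (\<Sum>k\<in>A. integral {-pi..pi} (\<lambda>x. a k * ee (k - j) x))"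
    using A by (intro integral_sum A integrable_on_mult_right ee_integrable)
  also have "\<dots> = (\<Sum>k\<in>A. a k * integral {-pi..pi} (ee (k - j)))"
    by (intro sum.cong refl integral_mult_right)
  also have "\<dots> = (\<Sum>k\<in>A. if k = j then a k * (2 * pi) else 0)"
    unfolding integral_ee by (intro sum.cong refl) auto
  also have "\<dots> = (if j \<in> A then a j * (2 * pi) else 0)"
    using A by (simp add: sum.delta')
  finally show ?thesis unfolding fc_ee by simp
qed

lemma L_norm_nonneg: "L_norm g \<ge> 0"
  unfolding L_norm_def
proof (cases "(\<lambda>x. norm (g x)) integrable_on {-pi..pi}")
  case True
  then show "integral {-pi..pi} (\<lambda>x. norm (g x)) \<ge> 0" by (rule integral_nonneg) simp
next
  case False
  then show "integral {-pi..pi} (\<lambda>x. norm (g x)) \<ge> 0" by (simp add: not_integrable_integral)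
qed

lemma L_norm_triangle:
  assumes "u absolutely_integrable_on {-pi..pi}" "v absolutely_integrable_on {-pi..pi}"
  shows "L_norm (\<lambda>x. u x + v x) \<le> L_norm u + L_norm v"
proof -
  have "integral {-pi..pi} (\<lambda>x. norm (u x + v x)) \<le> integral {-pi..pi} (\<lambda>x. norm (u x) + norm (v x))"
  proof (rule integral_le)
    show "(\<lambda>x. norm (u x + v x)) integrable_on {-pi..pi}"
      by (rule absint_norm_integrable, rule set_integral_add(1)) (use assms in auto)
    show "(\<lambda>x. norm (u x) + norm (v x)) integrable_on {-pi..pi}"
      by (rule integrable_add; rule absint_norm_integrable) (use assms in auto)
  qed (rule norm_triangle_ineq)
  also have "\<dots> = integral {-pi..pi} (\<lambda>x. norm (u x)) + integral {-pi..pi} (\<lambda>x. norm (v x))"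
    using assms by (intro integral_add absint_norm_integrable)
  finally show ?thesis unfolding L_norm_def .
qed

lemma L_norm_le:
  assumes "u absolutely_integrable_on {-pi..pi}" "h integrable_on {-pi..pi}"
    "\<And>x. x \<in> {-pi..pi} \<Longrightarrow> norm (u x) \<le> h x"
  shows "L_norm u \<le> integral {-pi..pi} h"
  unfolding L_norm_def using assms by (intro integral_le absint_norm_integrable) auto

lemma integral_bound_L:
  assumes g: "g absolutely_integrable_on {-pi..pi}" and h: "continuous_on {-pi..pi} h"
    and B: "\<And>x. x \<in> {-pi..pi} \<Longrightarrow> norm (h x) \<le> B"
  shows "norm (integral {-pi..pi} (\<lambda>x. g x * h x)) \<le> B * L_norm g"
proof -
  have "norm (integral {-pi..pi} (\<lambda>x. g x * h x)) \<le> integral {-pi..pi} (\<lambda>x. B * norm (g x))"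
  proof (rule integral_norm_bound_integral)
    show "(\<lambda>x. g x * h x) integrable_on {-pi..pi}"
      by (rule absint_integrable, rule absint_mult_cont[OF g h])
    show "(\<lambda>x. B * norm (g x)) integrable_on {-pi..pi}"
      by (intro integrable_on_mult_right absint_norm_integrable g)
    fix x assume "x \<in> {-pi..pi}"
    then show "norm (g x * h x) \<le> B * norm (g x)"
      using B[of x] by (simp add: norm_mult) (metis mult.commute mult_left_mono norm_ge_zero)
  qed
  also have "\<dots> = B * L_norm g" unfolding L_norm_def by simp
  finally show ?thesis .
qed


lemma sin_lower: assumes "0 \<le> t" "t \<le> pi/2" shows "t / 4 \<le> sin t"
proof (cases "t \<le> pi/3")
  case True
  show ?thesis
  proof (cases "t = 0")
    case True then show ?thesis by simp
  next
    case False
    then have "0 < t" using assms by simp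
    from MVT2[OF this, of sin cos] obtain z where z: "0 < z" "z < t" "sin t - sin 0 = (t - 0) * cos z"
      by (auto intro: DERIV_sin)
    have "cos (pi/3) \<le> cos z"
      using z True by (intro cos_monotone_0_pi_le) auto
    then have "cos z \<ge> 1/2" by (simp add: cos_60)
    then have "sin t \<ge> t * (1/2)" using z \<open>0 < t\<close> by (simp add: mult_left_mono)
    then show ?thesis using \<open>0 < t\<close> by simp
  qed
next
  case False
  have "sin (pi/3) \<le> sin t"
    using False assms by (subst sin_mono_le_eq) auto
  then have "sqrt 3 / 2 \<le> sin t" by (simp add: sin_60)
  moreover have "1 \<le> sqrt 3" by simp
  moreover have "t / 4 \<le> 1/2" using assms pi_less_4 by simp
  ultimately show ?thesis by linarith
qed

lemma abs_sin_half_lower: assumes "\<bar>y\<bar> \<le> pi" shows "\<bar>y\<bar> / 8 \<le> \<bar>sin (y/2)\<bar>"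
proof (cases "y \<ge> 0")
  case True
  then show ?thesis using sin_lower[of "y/2"] assms by simp
next
  case False
  then show ?thesis using sin_lower[of "-y/2"] assms by simp
qed

lemma ee_cis: "ee k y = cis (of_int k * y)"
  unfolding ee_def cis_conv_exp by (simp add: mult.assoc)

lemma norm_1_minus_cis: "norm (1 - cis y) = 2 * \<bar>sin (y/2)\<bar>"
proof -
  have "(norm (1 - cis y))^2 = (1 - cos y)^2 + (sin y)^2"
    by (simp add: cmod_power2)
  also have "\<dots> = 2 - 2 * cos y"
    using sin_cos_squared_add[of y] by (simp add: power2_eq_square algebra_simps)
  also have "cos y = 1 - 2 * sin (y/2)^2"
    using cos_double_sin[of "y/2"] by simp
  finally have "(norm (1 - cis y))^2 = (2 * \<bar>sin (y/2)\<bar>)^2"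
    by (simp add: power2_eq_square)
  then show ?thesis
    by (metis abs_of_nonneg norm_ge_zero power2_eq_iff_nonneg zero_le_mult_iff abs_ge_zero zero_le_numeral)
qed

lemma geom_bound:
  assumes y: "\<bar>y\<bar> \<le> pi" "y \<noteq> 0"
  shows "norm (\<Sum>j<n. ee (a + int j) y) \<le> 8 / \<bar>y\<bar>"
proof -
  define z where "z = cis y"
  have ee_pow: "ee (a + int j) y = ee a y * z ^ j" for j
  proof -
    have "z ^ j = cis (real j * y)" unfolding z_def by (rule Complex.DeMoivre)
    then show ?thesis unfolding ee_cis by (simp add: cis_mult algebra_simps)
  qed
  have s: "\<bar>sin (y/2)\<bar> \<ge> \<bar>y\<bar>/8" using abs_sin_half_lower y by simp
  have ypos: "\<bar>y\<bar> > 0" using y by simp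
  have z1: "norm (1 - z) = 2 * \<bar>sin (y/2)\<bar>" unfolding z_def by (rule norm_1_minus_cis)
  then have z1': "norm (1 - z) \<ge> \<bar>y\<bar>/4" using s by simp
  then have "z \<noteq> 1" using ypos by auto
  have "(\<Sum>j<n. ee (a + int j) y) = ee a y * ((1 - z^n) / (1 - z))"
    unfolding ee_pow by (simp add: sum_distrib_left[symmetric] sum_gp_strict \<open>z \<noteq> 1\<close>)
  then have "norm (\<Sum>j<n. ee (a + int j) y) = norm (1 - z^n) / norm (1 - z)"
    by (simp add: norm_mult norm_divide)
  also have "\<dots> \<le> 2 / norm (1 - z)"
  proof (rule divide_right_mono)
    have "norm (1 - z^n) \<le> norm (1::complex) + norm (z^n)" by (rule norm_triangle_ineq4)
    also have "norm (z^n) = 1" unfolding z_def by (simp add: norm_power)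
    finally show "norm (1 - z^n) \<le> 2" by simp
  qed simp
  also have "\<dots> \<le> 2 / (\<bar>y\<bar>/4)"
    using z1' ypos by (intro divide_left_mono) (auto intro!: mult_pos_pos)
  also have "\<dots> = 8 / \<bar>y\<bar>" by simp
  finally show ?thesis .
qed

lemma abel_identity:
  fixes u v :: "nat \<Rightarrow> complex"
  assumes "a \<le> b"
  shows "(\<Sum>k=a..b. u k * v k) = u b * (\<Sum>l=a..b. v l) + (\<Sum>k=a..<b. (u k - u (Suc k)) * (\<Sum>l=a..k. v l))"
  using assms
proof (induction b rule: dec_induct)
  case base
  then show ?case by simp
next
  case (step b)
  have "(\<Sum>k=a..Suc b. u k * v k) = (\<Sum>k=a..b. u k * v k) + u (Suc b) * v (Suc b)"
    using step.hyps by simp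
  also have "\<dots> = u b * (\<Sum>l=a..b. v l) + (\<Sum>k=a..<b. (u k - u (Suc k)) * (\<Sum>l=a..k. v l)) + u (Suc b) * v (Suc b)"
    using step.IH by simp
  also have "\<dots> = u (Suc b) * (\<Sum>l=a..Suc b. v l) + (\<Sum>k=a..<Suc b. (u k - u (Suc k)) * (\<Sum>l=a..k. v l))"
    using step.hyps by (simp add: algebra_simps)
  finally show ?case .
qed

lemma abel_bound:
  fixes u v :: "nat \<Rightarrow> complex"
  assumes "a \<le> b" and M: "\<And>k. a \<le> k \<Longrightarrow> k \<le> b \<Longrightarrow> norm (\<Sum>l=a..k. v l) \<le> M"
  shows "norm (\<Sum>k=a..b. u k * v k) \<le> (norm (u b) + (\<Sum>k=a..<b. norm (u k - u (Suc k)))) * M"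
proof -
  have "norm (\<Sum>k=a..b. u k * v k) \<le> norm (u b * (\<Sum>l=a..b. v l)) + norm (\<Sum>k=a..<b. (u k - u (Suc k)) * (\<Sum>l=a..k. v l))"
    unfolding abel_identity[OF assms(1)] by (rule norm_triangle_ineq)
  also have "\<dots> \<le> norm (u b) * M + (\<Sum>k=a..<b. norm (u k - u (Suc k)) * M)"
  proof (rule add_mono)
    show "norm (u b * (\<Sum>l=a..b. v l)) \<le> norm (u b) * M"
      unfolding norm_mult using M[of b] assms(1) by (intro mult_left_mono) auto
    show "norm (\<Sum>k=a..<b. (u k - u (Suc k)) * (\<Sum>l=a..k. v l)) \<le> (\<Sum>k=a..<b. norm (u k - u (Suc k)) * M)"
      by (rule order_trans[OF norm_sum], rule sum_mono) (use M in \<open>auto simp: norm_mult intro!: mult_left_mono\<close>)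
  qed
  also have "\<dots> = (norm (u b) + (\<Sum>k=a..<b. norm (u k - u (Suc k)))) * M"
    by (simp add: distrib_right sum_distrib_right)
  finally show ?thesis .
qed


lemma ee_scale: "ee (s * m) x = ee m (of_int s * x)"
  unfolding ee_def by (simp add: algebra_simps)

lemma ee_diff_sin: "norm (ee (int j) y - ee (- int j) y) \<le> 2 * real j * \<bar>y\<bar>"
proof -
  have "ee (int j) y - ee (- int j) y = 2 * \<i> * of_real (sin (real j * y))"
    unfolding ee_cis by (simp add: cis.ctr complex_eq_iff)
  then have "norm (ee (int j) y - ee (- int j) y) = 2 * \<bar>sin (real j * y)\<bar>"
    by (simp add: norm_mult)
  also have "\<dots> \<le> 2 * \<bar>real j * y\<bar>" using abs_sin_x_le_abs_x by simp
  finally show ?thesis by (simp add: abs_mult)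
qed

definition hsum :: "nat \<Rightarrow> real \<Rightarrow> complex" where
  "hsum p y = (\<Sum>j=1..p. (ee (int j) y - ee (- int j) y) / of_nat j)"

lemma geom_nat_bound:
  assumes y: "\<bar>y\<bar> \<le> pi" "y \<noteq> 0" and "a \<le> k"
  shows "norm (\<Sum>l=a..k. ee (int l) y) \<le> 8 / \<bar>y\<bar>"
proof -
  have "(\<Sum>l=a..k. ee (int l) y) = (\<Sum>j<Suc k - a. ee (int a + int j) y)"
  proof -
    have "(\<Sum>l=a..k. ee (int l) y) = (\<Sum>j\<in>{0..<Suc k - a}. ee (int (j + a)) y)"
      using \<open>a \<le> k\<close> by (subst sum.shift_bounds_nat_ivl[symmetric]) (simp add: atLeastLessThanSuc_atLeastAtMost)
    then show ?thesis by (simp add: atLeast0LessThan add.commute)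
  qed
  then show ?thesis using geom_bound[OF y] by simp
qed

lemma geom_nat_bound':
  assumes y: "\<bar>y\<bar> \<le> pi" "y \<noteq> 0" and "a \<le> k"
  shows "norm (\<Sum>l=a..k. ee (int l) y - ee (- int l) y) \<le> 16 / \<bar>y\<bar>"
proof -
  have e: "ee (- int l) y = ee (int l) (-y)" for l unfolding ee_def by simp
  have "norm (\<Sum>l=a..k. ee (int l) y - ee (- int l) y) \<le> norm (\<Sum>l=a..k. ee (int l) y) + norm (\<Sum>l=a..k. ee (int l) (-y))"
    unfolding sum_subtractf e by (rule norm_triangle_ineq4)
  also have "\<dots> \<le> 8 / \<bar>y\<bar> + 8 / \<bar>-y\<bar>"
    using assms by (intro add_mono geom_nat_bound) auto
  finally show ?thesis by simp
qed

lemma telescope_real: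
  fixes u :: "nat \<Rightarrow> real"
  assumes "a \<le> b"
  shows "u b + (\<Sum>k=a..<b. (u k - u (Suc k))) = u a"
  using assms by (induction b rule: dec_induct; simp)

definition HB :: real where "HB = 2 * pi + 8"

lemma hsum_bound:
  assumes y: "\<bar>y\<bar> \<le> pi"
  shows "norm (hsum p y) \<le> HB"
proof (cases "y = 0")
  case True
  then show ?thesis unfolding hsum_def HB_def ee_def by simp
next
  case False
  then have ypos: "\<bar>y\<bar> > 0" by simp
  define m where "m = nat \<lfloor>pi / \<bar>y\<bar>\<rfloor>"
  have m1: "real m * \<bar>y\<bar> \<le> pi"
  proof -
    have "real m \<le> pi / \<bar>y\<bar>" unfolding m_def using ypos
      by (simp add: of_nat_nat)
    then show ?thesis using ypos by (simp add: field_simps)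
  qed
  have m2: "pi < (real m + 1) * \<bar>y\<bar>"
  proof -
    have "pi / \<bar>y\<bar> < real m + 1" unfolding m_def using ypos
      by (simp add: of_nat_nat)
    then show ?thesis using ypos by (simp add: field_simps)
  qed
  define t where "t j = (ee (int j) y - ee (- int j) y) / of_nat j" for j
  have tb: "norm (t j) \<le> 2 * \<bar>y\<bar>" if "j \<ge> 1" for j
  proof -
    have "norm (t j) = norm (ee (int j) y - ee (- int j) y) / real j" unfolding t_def by (simp add: norm_divide)
    also have "\<dots> \<le> 2 * real j * \<bar>y\<bar> / real j" by (intro divide_right_mono ee_diff_sin) simp
    also have "\<dots> = 2 * \<bar>y\<bar>" using that by simp
    finally show ?thesis .
  qed
  have first: "norm (\<Sum>j=1..q. t j) \<le> 2 * pi" if "q \<le> m" for q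
  proof -
    have "norm (\<Sum>j=1..q. t j) \<le> (\<Sum>j=1..q. 2 * \<bar>y\<bar>)" by (rule order_trans[OF norm_sum sum_mono]) (use tb in auto)
    also have "\<dots> = real q * (2 * \<bar>y\<bar>)" by simp
    also have "\<dots> \<le> real m * (2 * \<bar>y\<bar>)" using that by (intro mult_right_mono) auto
    also have "\<dots> \<le> 2 * pi" using m1 by simp
    finally show ?thesis .
  qed
  show ?thesis
  proof (cases "p \<le> m")
    case True
    then show ?thesis using first[of p] unfolding hsum_def HB_def t_def by simp
  next
    case False
    have split: "{1..p} = {1..m} \<union> {Suc m..p}" using False by auto
    have "hsum p y = (\<Sum>j=1..m. t j) + (\<Sum>j=Suc m..p. t j)"
      unfolding hsum_def t_def[symmetric] split by (subst sum.union_disjoint) auto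
    also have "norm \<dots> \<le> 2 * pi + 16 / pi"
    proof (rule order_trans[OF norm_triangle_ineq add_mono[OF first[OF order_refl]]])
      define u where "u j = complex_of_real (1 / real j)" for j
      define v where "v j = ee (int j) y - ee (- int j) y" for j
      have tuv: "t j = u j * v j" for j unfolding t_def u_def v_def by (simp add: field_simps)
      have "norm (\<Sum>j=Suc m..p. u j * v j) \<le> (norm (u p) + (\<Sum>k=Suc m..<p. norm (u k - u (Suc k)))) * (16 / \<bar>y\<bar>)"
        using False by (intro abel_bound geom_nat_bound'[OF y \<open>y \<noteq> 0\<close>, folded v_def]) auto
      also have "norm (u p) + (\<Sum>k=Suc m..<p. norm (u k - u (Suc k))) = 1 / real (Suc m)"
      proof -
        have "norm (u k - u (Suc k)) = 1 / real k - 1 / real (Suc k)" if "k \<ge> Suc m" for k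
        proof -
          have "u k - u (Suc k) = complex_of_real (1 / real k - 1 / real (Suc k))" unfolding u_def by simp
          moreover have "1 / real k - 1 / real (Suc k) \<ge> 0" using that by (simp add: frac_le)
          ultimately show ?thesis by (metis abs_of_nonneg norm_of_real)
        qed
        then have "(\<Sum>k=Suc m..<p. norm (u k - u (Suc k))) = (\<Sum>k=Suc m..<p. (1 / real k - 1 / real (Suc k)))"
          by (intro sum.cong) auto
        moreover have "norm (u p) = 1 / real p" unfolding u_def by (simp add: norm_divide)
        ultimately show ?thesis
          using telescope_real[of "Suc m" p "\<lambda>k. 1 / real k"] False by simp
      qed
      also have "1 / real (Suc m) * (16 / \<bar>y\<bar>) \<le> 16 / pi"
      proof -
        have "1 / real (Suc m) * (16 / \<bar>y\<bar>) = 16 / ((real m + 1) * \<bar>y\<bar>)" by simp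
        also have "\<dots> \<le> 16 / pi" using m2 using pi_gt_zero by (intro divide_left_mono) (auto intro!: mult_pos_pos)
        finally show ?thesis .
      qed
      finally show "norm (\<Sum>j=Suc m..p. t j) \<le> 16 / pi" unfolding tuv .
    qed
    also have "\<dots> \<le> HB" unfolding HB_def using pi_ge_two
      by (simp add: field_simps)
    finally show ?thesis .
  qed
qed

lemma pairing2:
  assumes g: "g absolutely_integrable_on {-pi..pi}" and J: "finite J"
  shows "integral {-pi..pi} (\<lambda>x. g x * (\<Sum>j\<in>J. c j * ee (\<kappa>1 j) x + d j * ee (\<kappa>2 j) x)) =
    2 * pi * (\<Sum>j\<in>J. c j * fourier_coeff g (- \<kappa>1 j) + d j * fourier_coeff g (- \<kappa>2 j))"
proof -
  have "integral {-pi..pi} (\<lambda>x. g x * (\<Sum>j\<in>J. c j * ee (\<kappa>1 j) x + d j * ee (\<kappa>2 j) x)) =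
     integral {-pi..pi} (\<lambda>x. \<Sum>j\<in>J. c j * (g x * ee (\<kappa>1 j) x) + d j * (g x * ee (\<kappa>2 j) x))"
    by (simp add: sum_distrib_left algebra_simps)
  also have "\<dots> = (\<Sum>j\<in>J. integral {-pi..pi} (\<lambda>x. c j * (g x * ee (\<kappa>1 j) x) + d j * (g x * ee (\<kappa>2 j) x)))"
    using J by (intro integral_sum J integrable_add integrable_on_mult_right mult_ee_integrable[OF g])
  also have "\<dots> = (\<Sum>j\<in>J. c j * integral {-pi..pi} (\<lambda>x. g x * ee (\<kappa>1 j) x) + d j * integral {-pi..pi} (\<lambda>x. g x * ee (\<kappa>2 j) x))"
    by (intro sum.cong refl, subst integral_add) (auto intro!: integrable_on_mult_right mult_ee_integrable[OF g])
  also have "\<dots> = 2 * pi * (\<Sum>j\<in>J. c j * fourier_coeff g (- \<kappa>1 j) + d j * fourier_coeff g (- \<kappa>2 j))"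
    unfolding fc_ee by (simp add: sum_distrib_left algebra_simps)
  finally show ?thesis .
qed

lemma window:
  assumes g: "g absolutely_integrable_on {-pi..pi}" and s: "s = 1 \<or> s = -1"
    and z: "\<And>k. \<bar>k\<bar> \<le> int p \<Longrightarrow> fourier_coeff g k = 0"
  shows "2 * pi * norm (\<Sum>j=1..p. fourier_coeff g (s * (int p + int j)) / of_nat j) \<le> HB * L_norm g"
proof -
  define h where "h x = (\<Sum>j\<in>{1..p}. (1 / of_nat j) * ee (- s * (int p + int j)) x + (- 1 / of_nat j) * ee (- s * (int p - int j)) x)" for x
  have hcont: "continuous_on {-pi..pi} h" unfolding h_def by (intro continuous_intros)
  have hx: "h x = ee (- s * int p) x * hsum p (of_int (- s) * x)" for x
  proof -
    have "h x = (\<Sum>j\<in>{1..p}. ee (- s * int p) x * ((ee (int j) (of_int (- s) * x) - ee (- int j) (of_int (- s) * x)) / of_nat j))"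
      unfolding h_def
    proof (intro sum.cong refl)
      fix j
      have a: "ee (- s * (int p + int j)) x = ee (- s * int p) x * ee (int j) (of_int (- s) * x)"
        unfolding ee_def by (simp add: exp_add[symmetric] algebra_simps)
      have b: "ee (- s * (int p - int j)) x = ee (- s * int p) x * ee (- int j) (of_int (- s) * x)"
        unfolding ee_def by (simp add: exp_add[symmetric] algebra_simps)
      show "1 / of_nat j * ee (- s * (int p + int j)) x + - 1 / of_nat j * ee (- s * (int p - int j)) x =
        ee (- s * int p) x * ((ee (int j) (of_int (- s) * x) - ee (- int j) (of_int (- s) * x)) / of_nat j)"
        unfolding a b by (simp add: diff_divide_distrib right_diff_distrib)
    qed
    also have "\<dots> = ee (- s * int p) x * hsum p (of_int (- s) * x)"
      unfolding hsum_def by (simp add: sum_distrib_left)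
    finally show ?thesis .
  qed
  have hb: "norm (h x) \<le> HB" if "x \<in> {-pi..pi}" for x
  proof -
    have "\<bar>of_int (- s) * x\<bar> \<le> pi" using s that by auto
    then show ?thesis unfolding hx norm_mult by (simp add: hsum_bound)
  qed
  have "integral {-pi..pi} (\<lambda>x. g x * h x) =
    2 * pi * (\<Sum>j\<in>{1..p}. (1 / of_nat j) * fourier_coeff g (- (- s * (int p + int j))) + (- 1 / of_nat j) * fourier_coeff g (- (- s * (int p - int j))))"
    unfolding h_def by (rule pairing2[OF g]) simp
  also have "\<dots> = 2 * pi * (\<Sum>j=1..p. fourier_coeff g (s * (int p + int j)) / of_nat j)"
  proof -
    have "fourier_coeff g (- (- s * (int p - int j))) = 0" if "j \<in> {1..p}" for j
      using that s by (intro z) auto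
    then have "(1 / of_nat j) * fourier_coeff g (- (- s * (int p + int j))) + (- 1 / of_nat j) * fourier_coeff g (- (- s * (int p - int j)))
       = fourier_coeff g (s * (int p + int j)) / of_nat j" if "j \<in> {1..p}" for j
      using that by simp
    then have "(\<Sum>j\<in>{1..p}. (1 / of_nat j) * fourier_coeff g (- (- s * (int p + int j))) + (- 1 / of_nat j) * fourier_coeff g (- (- s * (int p - int j))))
       = (\<Sum>j=1..p. fourier_coeff g (s * (int p + int j)) / of_nat j)" by (rule sum.cong[OF refl])
    then show ?thesis by simp
  qed
  finally have eq: "integral {-pi..pi} (\<lambda>x. g x * h x) = 2 * pi * (\<Sum>j=1..p. fourier_coeff g (s * (int p + int j)) / of_nat j)" .
  have "norm (integral {-pi..pi} (\<lambda>x. g x * h x)) \<le> HB * L_norm g"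
    by (rule integral_bound_L[OF g hcont hb])
  then show ?thesis unfolding eq by (simp add: norm_mult)
qed

lemma sector_Re:
  assumes "z \<in> sector \<theta>" "0 \<le> \<theta>" "\<theta> < pi / 2"
  shows "cos \<theta> * norm z \<le> Re z"
proof (cases "z = 0")
  case True then show ?thesis by simp
next
  case False
  then have a: "\<bar>Arg z\<bar> \<le> \<theta>" using assms(1) unfolding sector_def by auto
  have "cos \<theta> \<le> cos \<bar>Arg z\<bar>" using a assms by (intro cos_monotone_0_pi_le) auto
  also have "cos \<bar>Arg z\<bar> = cos (Arg z)" by (cases "Arg z \<ge> 0") auto
  also have "cos (Arg z) = Re z / norm z" using False by (rule cos_Arg)
  finally show ?thesis using False by (simp add: field_simps)
qed


lemma d_bound:
  fixes d :: "nat \<Rightarrow> complex"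
  assumes "m \<le> n"
  shows "norm (d n) \<le> norm (d m) + (\<Sum>i=m..<n. norm (d i - d (Suc i)))"
  using assms
proof (induction n rule: dec_induct)
  case base then show ?case by simp
next
  case (step n)
  have "norm (d (Suc n)) \<le> norm (d n) + norm (d n - d (Suc n))"
    by (metis add.commute norm_triangle_sub norm_minus_commute)
  then show ?case using step by simp
qed

definition Ssum :: "(nat \<Rightarrow> complex) \<Rightarrow> nat \<Rightarrow> real" where
  "Ssum d q = (\<Sum>j=1..q. norm (d (q + j)) / real j)"

lemma Ssum_nonneg: "Ssum d q \<ge> 0"
  unfolding Ssum_def by (intro sum_nonneg) auto

lemma nbvs_key:
  fixes d :: "nat \<Rightarrow> complex"
  assumes K: "\<forall>m\<ge>1. (\<Sum>n=m..2*m. norm (d n - d (Suc n))) \<le> K * (norm (d m) + norm (d (2*m)))"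
    and Kpos: "K > 0" and p: "p \<ge> 1" and n: "2 * p \<le> n" "n \<le> 2 * p + 1"
  shows "norm (d n) * harm p \<le> (1 + K) * (Ssum d p + 2 * Ssum d (2 * p))"
proof -
  have one: "norm (d n) \<le> (1 + K) * (norm (d (p + j)) + norm (d (2 * (p + j))))" if j: "j \<in> {1..p}" for j
  proof -
    define m where "m = p + j"
    have mn: "m \<le> n" "n \<le> 2 * m" "m \<ge> 1" using j n unfolding m_def by auto
    have "norm (d n) \<le> norm (d m) + (\<Sum>i=m..<n. norm (d i - d (Suc i)))" by (rule d_bound) (use mn in auto)
    also have "(\<Sum>i=m..<n. norm (d i - d (Suc i))) \<le> (\<Sum>i=m..2*m. norm (d i - d (Suc i)))"
      using mn by (intro sum_mono2) auto
    also have "\<dots> \<le> K * (norm (d m) + norm (d (2*m)))" using K mn by auto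
    finally have "norm (d n) \<le> norm (d m) + K * (norm (d m) + norm (d (2*m)))" by simp
    also have "\<dots> \<le> (1 + K) * (norm (d m) + norm (d (2 * m)))"
      using Kpos by (simp add: algebra_simps)
    finally show ?thesis unfolding m_def .
  qed
  have "norm (d n) * harm p = (\<Sum>j=1..p. norm (d n) / real j)"
    unfolding harm_def by (simp add: sum_distrib_left divide_inverse)
  also have "\<dots> \<le> (\<Sum>j=1..p. (1 + K) * (norm (d (p + j)) + norm (d (2 * (p + j)))) / real j)"
    using one by (intro sum_mono divide_right_mono) auto
  also have "\<dots> = (1 + K) * (Ssum d p + (\<Sum>j=1..p. norm (d (2 * p + 2 * j)) / real j))"
    unfolding Ssum_def by (simp add: sum_distrib_left sum.distrib add_divide_distrib algebra_simps)
  also have "(\<Sum>j=1..p. norm (d (2 * p + 2 * j)) / real j) \<le> 2 * Ssum d (2 * p)"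
  proof -
    have "(\<Sum>j=1..p. norm (d (2 * p + 2 * j)) / real j) = 2 * (\<Sum>j=1..p. norm (d (2 * p + 2 * j)) / real (2 * j))"
      by (simp add: sum_distrib_left)
    also have "(\<Sum>j=1..p. norm (d (2 * p + 2 * j)) / real (2 * j)) = (\<Sum>i\<in>(\<lambda>j. 2 * j) ` {1..p}. norm (d (2 * p + i)) / real i)"
      by (subst sum.reindex) (auto simp: inj_on_def)
    also have "\<dots> \<le> (\<Sum>i=1..2*p. norm (d (2 * p + i)) / real i)"
      by (intro sum_mono2) auto
    finally show ?thesis unfolding Ssum_def by simp
  qed
  then have "(1 + K) * (Ssum d p + (\<Sum>j=1..p. norm (d (2 * p + 2 * j)) / real j)) \<le> (1 + K) * (Ssum d p + 2 * Ssum d (2 * p))"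
    using Kpos by (intro mult_left_mono) auto
  finally show ?thesis .
qed

abbreviation Lerr :: "(real \<Rightarrow> complex) \<Rightarrow> nat \<Rightarrow> real" where
  "Lerr f p \<equiv> L_norm (\<lambda>x. f x - partial_sum f p x)"

lemma err_absint:
  assumes f: "f absolutely_integrable_on {-pi..pi}"
  shows "(\<lambda>x. f x - partial_sum f p x) absolutely_integrable_on {-pi..pi}"
  unfolding partial_sum_tp by (rule set_integral_diff(1)[OF f tp_absint])

lemma coeff_err:
  assumes f: "f absolutely_integrable_on {-pi..pi}"
  shows "fourier_coeff (\<lambda>x. f x - partial_sum f p x) k = (if \<bar>k\<bar> \<le> int p then 0 else fourier_coeff f k)"
  unfolding partial_sum_tp
  by (subst fc_diff[OF f tp_absint], subst fc_tp) auto

lemma Ssum_bound: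
  assumes f: "f absolutely_integrable_on {-pi..pi}" and s: "s = 1 \<or> s = -1"
    and sec: "\<forall>n\<ge>1. fourier_coeff f (s * int n) \<in> sector \<theta>" and th: "0 \<le> \<theta>" "\<theta> < pi / 2"
  shows "cos \<theta> * (2 * pi) * Ssum (\<lambda>n. fourier_coeff f (s * int n)) p \<le> HB * Lerr f p"
proof -
  define d where "d n = fourier_coeff f (s * int n)" for n
  define g where "g x = f x - partial_sum f p x" for x
  have g: "g absolutely_integrable_on {-pi..pi}" unfolding g_def by (rule err_absint[OF f])
  have gz: "fourier_coeff g k = 0" if "\<bar>k\<bar> \<le> int p" for k
    unfolding g_def coeff_err[OF f] using that by simp
  have gc: "fourier_coeff g (s * (int p + int j)) = d (p + j)" if "j \<ge> 1" for j
    unfolding g_def coeff_err[OF f] d_def using that s by auto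
  have secd: "d n \<in> sector \<theta>" if "n \<ge> 1" for n using sec that unfolding d_def by auto
  have "cos \<theta> * Ssum d p = (\<Sum>j=1..p. cos \<theta> * norm (d (p + j)) / real j)"
    unfolding Ssum_def by (simp add: sum_distrib_left)
  also have "\<dots> \<le> (\<Sum>j=1..p. Re (d (p + j)) / real j)"
    using secd th by (intro sum_mono divide_right_mono sector_Re) auto
  also have "\<dots> = Re (\<Sum>j=1..p. d (p + j) / of_nat j)"
    by (simp add: Re_divide_of_nat)
  also have "\<dots> \<le> norm (\<Sum>j=1..p. d (p + j) / of_nat j)" by (rule complex_Re_le_cmod)
  also have "(\<Sum>j=1..p. d (p + j) / of_nat j) = (\<Sum>j=1..p. fourier_coeff g (s * (int p + int j)) / of_nat j)"
    using gc by (intro sum.cong) auto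
  finally have "cos \<theta> * Ssum d p \<le> norm (\<Sum>j=1..p. fourier_coeff g (s * (int p + int j)) / of_nat j)" .
  then have "2 * pi * (cos \<theta> * Ssum d p) \<le> 2 * pi * norm (\<Sum>j=1..p. fourier_coeff g (s * (int p + int j)) / of_nat j)"
    by (intro mult_left_mono) auto
  also have "\<dots> \<le> HB * L_norm g" by (rule window[OF g s gz])
  finally show ?thesis unfolding g_def d_def by (simp add: algebra_simps)
qed


lemma sum_sym_split:
  fixes G :: "int \<Rightarrow> 'a::comm_monoid_add"
  assumes "n \<le> M"
  shows "(\<Sum>k\<in>{-int M..int M}. G k) = (\<Sum>k\<in>{-int n..int n}. G k) + (\<Sum>k\<in>{Suc n..M}. G (int k) + G (- int k))"
  using assms
proof (induction M rule: dec_induct)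
  case base then show ?case by simp
next
  case (step M)
  have e: "{-int (Suc M)..int (Suc M)} = insert (int (Suc M)) (insert (- int (Suc M)) {-int M..int M})" by auto
  have "(\<Sum>k\<in>{-int (Suc M)..int (Suc M)}. G k) = G (int (Suc M)) + (G (- int (Suc M)) + (\<Sum>k\<in>{-int M..int M}. G k))"
    unfolding e by (subst sum.insert; simp)+
  also have "\<dots> = (\<Sum>k\<in>{-int n..int n}. G k) + (\<Sum>k\<in>{Suc n..Suc M}. G (int k) + G (- int k))"
    using step by (simp add: algebra_simps)
  finally show ?case .
qed

lemma count_pairs:
  fixes F :: "int \<Rightarrow> complex"
  shows "(\<Sum>j<Suc N. \<Sum>l<Suc N. F (int j - int l)) = (\<Sum>k\<in>{-int N..int N}. of_int (int N + 1 - \<bar>k\<bar>) * F k)"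
proof (induction N)
  case 0 then show ?case by simp
next
  case (Suc N)
  have A: "(\<Sum>j<Suc N. F (int j - int (Suc N))) = (\<Sum>k\<in>{-int (Suc N)..-1}. F k)"
    by (rule sum.reindex_bij_witness[where i="\<lambda>k. nat (k + int (Suc N))" and j="\<lambda>j. int j - int (Suc N)"]) auto
  have B: "(\<Sum>l<Suc (Suc N). F (int (Suc N) - int l)) = (\<Sum>k\<in>{0..int (Suc N)}. F k)"
    by (rule sum.reindex_bij_witness[where i="\<lambda>k. nat (int (Suc N) - k)" and j="\<lambda>l. int (Suc N) - int l"]) auto
  have C: "(\<Sum>k\<in>{-int (Suc N)..int (Suc N)}. F k) = (\<Sum>k\<in>{-int (Suc N)..-1}. F k) + (\<Sum>k\<in>{0..int (Suc N)}. F k)"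
  proof -
    have "{-int (Suc N)..int (Suc N)} = {-int (Suc N)..-1} \<union> {0..int (Suc N)}" by auto
    then show ?thesis by (simp add: sum.union_disjoint)
  qed
  have D: "(\<Sum>k\<in>{-int (Suc N)..int (Suc N)}. of_int (int N + 1 - \<bar>k\<bar>) * F k) = (\<Sum>k\<in>{-int N..int N}. of_int (int N + 1 - \<bar>k\<bar>) * F k)"
    using sum_sym_split[of N "Suc N" "\<lambda>k. of_int (int N + 1 - \<bar>k\<bar>) * F k"] by simp
  have "(\<Sum>j<Suc (Suc N). \<Sum>l<Suc (Suc N). F (int j - int l)) =
     (\<Sum>j<Suc N. \<Sum>l<Suc N. F (int j - int l)) + (\<Sum>j<Suc N. F (int j - int (Suc N))) + (\<Sum>l<Suc (Suc N). F (int (Suc N) - int l))"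
    by (simp add: sum.distrib algebra_simps)
  also have "\<dots> = (\<Sum>k\<in>{-int (Suc N)..int (Suc N)}. of_int (int N + 1 - \<bar>k\<bar>) * F k) + (\<Sum>k\<in>{-int (Suc N)..int (Suc N)}. F k)"
    unfolding Suc.IH A B C D by (simp add: algebra_simps)
  also have "\<dots> = (\<Sum>k\<in>{-int (Suc N)..int (Suc N)}. of_int (int (Suc N) + 1 - \<bar>k\<bar>) * F k)"
    by (simp add: sum.distrib[symmetric] algebra_simps)
  finally show ?case .
qed

definition lam :: "nat \<Rightarrow> int \<Rightarrow> real" where
  "lam N k = 1 - \<bar>real_of_int k\<bar> / (real N + 1)"

definition FK :: "nat \<Rightarrow> real \<Rightarrow> complex" where
  "FK N y = (\<Sum>k\<in>{-int N..int N}. of_real (lam N k) * ee k y)"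

definition FKr :: "nat \<Rightarrow> real \<Rightarrow> real" where
  "FKr N y = (norm (\<Sum>j<Suc N. ee (int j) y))^2 / (real N + 1)"

lemma cnj_ee: "cnj (ee k y) = ee (-k) y"
  unfolding ee_cis by (simp add: complex_eq_iff)

lemma FK_real: "FK N y = of_real (FKr N y)"
proof -
  define S where "S = (\<Sum>j<Suc N. ee (int j) y)"
  have "of_real ((norm S)^2) = S * cnj S" by (rule complex_norm_square)
  also have "\<dots> = (\<Sum>j<Suc N. \<Sum>l<Suc N. ee (int j - int l) y)"
    unfolding S_def cnj_sum cnj_ee sum_product ee_mult by (simp only: diff_conv_add_uminus)
  also have "\<dots> = (\<Sum>k\<in>{-int N..int N}. of_int (int N + 1 - \<bar>k\<bar>) * ee k y)"
    by (rule count_pairs)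
  finally have *: "of_real ((norm S)^2) = (\<Sum>k\<in>{-int N..int N}. of_int (int N + 1 - \<bar>k\<bar>) * ee k y)" .
  have "FK N y = (\<Sum>k\<in>{-int N..int N}. of_int (int N + 1 - \<bar>k\<bar>) * ee k y) / of_real (real N + 1)"
    unfolding FK_def lam_def sum_divide_distrib
  proof (intro sum.cong refl)
    fix k
    have "of_real (1 - \<bar>real_of_int k\<bar> / (real N + 1)) = (complex_of_real (real N + 1 - \<bar>real_of_int k\<bar>)) / of_real (real N + 1)"
      by (simp add: field_simps)
    moreover have "complex_of_real \<bar>real_of_int k\<bar> = of_int \<bar>k\<bar>"
      by (metis of_int_abs of_real_of_int_eq)
    ultimately show "of_real (1 - \<bar>real_of_int k\<bar> / (real N + 1)) * ee k y = of_int (int N + 1 - \<bar>k\<bar>) * ee k y / of_real (real N + 1)"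
      by simp
  qed
  also have "\<dots> = of_real (FKr N y)"
    unfolding FKr_def *[symmetric] S_def by simp
  finally show ?thesis .
qed

lemma FKr_nonneg: "FKr N y \<ge> 0"
  unfolding FKr_def by simp

lemma FK_shift: "FK N (x - t) = (\<Sum>k\<in>{-int N..int N}. (of_real (lam N k) * ee k x) * ee (- k) t)"
  unfolding FK_def ee_def by (intro sum.cong refl) (simp add: exp_add[symmetric] algebra_simps)

lemma FKr_cont: "continuous_on A (FKr N)"
  unfolding FKr_def by (intro continuous_intros) simp

definition sigma :: "nat \<Rightarrow> (real \<Rightarrow> complex) \<Rightarrow> real \<Rightarrow> complex" where
  "sigma N g x = (\<Sum>k\<in>{-int N..int N}. of_real (lam N k) * fourier_coeff g k * ee k x)"

lemma sigma_cont[continuous_intros]: "continuous_on A (sigma N g)"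
  unfolding sigma_def by (intro continuous_intros)

lemma sigma_int:
  assumes g: "g absolutely_integrable_on {-pi..pi}"
  shows "sigma N g x = integral {-pi..pi} (\<lambda>t. g t * FK N (x - t)) / (2 * pi)"
proof -
  have "integral {-pi..pi} (\<lambda>t. g t * FK N (x - t)) =
     integral {-pi..pi} (\<lambda>t. g t * (\<Sum>k\<in>{-int N..int N}. (of_real (lam N k) * ee k x) * ee (- k) t + 0 * ee 0 t))"
    unfolding FK_shift by simp
  also have "\<dots> = 2 * pi * (\<Sum>k\<in>{-int N..int N}. (of_real (lam N k) * ee k x) * fourier_coeff g (- (- k)) + 0 * fourier_coeff g (- 0))"
    by (rule pairing2[OF g]) simp
  also have "\<dots> = 2 * pi * sigma N g x"
    unfolding sigma_def by (simp add: algebra_simps)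
  finally show ?thesis by simp
qed

lemma integral_sigma: "integral {-pi..pi} (sigma N g) = 2 * pi * fourier_coeff g 0"
proof -
  have "sigma N g = tp (\<lambda>k. of_real (lam N k) * fourier_coeff g k) {-int N..int N}"
    unfolding sigma_def tp_def by (rule ext) simp
  then have "integral {-pi..pi} (sigma N g) = 2 * pi * fourier_coeff (tp (\<lambda>k. of_real (lam N k) * fourier_coeff g k) {-int N..int N}) 0"
    using fc_ee[of "tp (\<lambda>k. of_real (lam N k) * fourier_coeff g k) {-int N..int N}" 0] by simp
  also have "\<dots> = 2 * pi * fourier_coeff g 0"
    by (subst fc_tp) (auto simp: lam_def)
  finally show ?thesis .
qed


lemma integral_Re_eq:
  assumes "f integrable_on A"
  shows "integral A (\<lambda>x. Re (f x)) = Re (integral A f)"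
  using has_integral_Re[OF integrable_integral[OF assms]] by (rule integral_unique)

lemma FK_cont: "continuous_on A (\<lambda>t. FK N (x - t))"
  unfolding FK_shift by (intro continuous_intros)

lemma norm_FK: "norm (FK N y) = FKr N y"
  unfolding FK_real using FKr_nonneg by simp

lemma sigma_L:
  assumes g: "g absolutely_integrable_on {-pi..pi}"
  shows "L_norm (sigma N g) \<le> L_norm g"
proof -
  define r where "r t = norm (g t)" for t
  define G where "G t = complex_of_real (r t)" for t
  have r: "r integrable_on {-pi..pi}" unfolding r_def by (rule absint_norm_integrable[OF g])
  have Gi: "G integrable_on {-pi..pi}" unfolding G_def using has_integral_of_real[OF integrable_integral[OF r]]
    by blast
  have G: "G absolutely_integrable_on {-pi..pi}"
    by (rule absolutely_integrable_integrable_bound[OF _ Gi r]) (simp add: G_def r_def)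
  have pt: "norm (sigma N g x) \<le> Re (sigma N G x)" for x
  proof -
    have i1: "(\<lambda>t. g t * FK N (x - t)) integrable_on {-pi..pi}"
      by (rule absint_integrable, rule absint_mult_cont[OF g FK_cont])
    have i2: "(\<lambda>t. G t * FK N (x - t)) integrable_on {-pi..pi}"
      by (rule absint_integrable, rule absint_mult_cont[OF G FK_cont])
    have "norm (integral {-pi..pi} (\<lambda>t. g t * FK N (x - t))) \<le> integral {-pi..pi} (\<lambda>t. Re (G t * FK N (x - t)))"
    proof (rule integral_norm_bound_integral[OF i1])
      show "(\<lambda>t. Re (G t * FK N (x - t))) integrable_on {-pi..pi}"
        using has_integral_Re[OF integrable_integral[OF i2]] by blast
      fix t
      show "norm (g t * FK N (x - t)) \<le> Re (G t * FK N (x - t))"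
        unfolding G_def FK_real r_def by (simp add: norm_mult FKr_nonneg)
    qed
    also have "\<dots> = Re (integral {-pi..pi} (\<lambda>t. G t * FK N (x - t)))"
      by (rule integral_Re_eq[OF i2])
    finally have "norm (integral {-pi..pi} (\<lambda>t. g t * FK N (x - t))) \<le> Re (integral {-pi..pi} (\<lambda>t. G t * FK N (x - t)))" .
    then show ?thesis unfolding sigma_int[OF g] sigma_int[OF G]
      by (simp add: norm_divide divide_right_mono)
  qed
  have ci: "(\<lambda>x. Re (sigma N G x)) integrable_on {-pi..pi}"
    by (intro integrable_continuous_interval continuous_intros)
  have "L_norm (sigma N g) \<le> integral {-pi..pi} (\<lambda>x. Re (sigma N G x))"
    by (rule L_norm_le[OF _ ci pt]) (intro absolutely_integrable_continuous_real sigma_cont)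
  also have "\<dots> = Re (integral {-pi..pi} (sigma N G))"
    by (rule integral_Re_eq) (intro integrable_continuous_interval sigma_cont)
  also have "\<dots> = Re (2 * pi * fourier_coeff G 0)" unfolding integral_sigma ..
  also have "\<dots> = Re (integral {-pi..pi} G)"
    unfolding fc_ee by simp
  also have "\<dots> = L_norm g"
  proof -
    have "integral {-pi..pi} G = of_real (integral {-pi..pi} r)"
      unfolding G_def by (rule integral_unique, rule has_integral_of_real, rule integrable_integral[OF r])
    then show ?thesis unfolding L_norm_def r_def by simp
  qed
  finally show ?thesis .
qed

lemma L_norm_cmult: "L_norm (\<lambda>x. c * u x) = norm c * L_norm u"
  unfolding L_norm_def by (simp add: norm_mult)

lemma L_norm_uminus: "L_norm (\<lambda>x. - u x) = L_norm u"
  unfolding L_norm_def by simp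

lemma L_norm_diff:
  assumes "u absolutely_integrable_on {-pi..pi}" "v absolutely_integrable_on {-pi..pi}"
  shows "L_norm (\<lambda>x. u x - v x) \<le> L_norm u + L_norm v"
proof -
  have "integral {-pi..pi} (\<lambda>x. norm (u x - v x)) \<le> integral {-pi..pi} (\<lambda>x. norm (u x) + norm (v x))"
  proof (rule integral_le)
    show "(\<lambda>x. norm (u x - v x)) integrable_on {-pi..pi}"
      by (rule absint_norm_integrable, rule set_integral_diff(1)) (use assms in auto)
    show "(\<lambda>x. norm (u x) + norm (v x)) integrable_on {-pi..pi}"
      by (rule integrable_add; rule absint_norm_integrable) (use assms in auto)
  qed (rule norm_triangle_ineq4)
  also have "\<dots> = integral {-pi..pi} (\<lambda>x. norm (u x)) + integral {-pi..pi} (\<lambda>x. norm (v x))"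
    by (rule integral_add; rule absint_norm_integrable) (use assms in auto)
  finally show ?thesis unfolding L_norm_def .
qed

definition V :: "nat \<Rightarrow> (real \<Rightarrow> complex) \<Rightarrow> real \<Rightarrow> complex" where
  "V n g x = 2 * sigma (2 * n - 1) g x - sigma (n - 1) g x"

lemma V_L:
  assumes g: "g absolutely_integrable_on {-pi..pi}"
  shows "L_norm (V n g) \<le> 3 * L_norm g"
proof -
  have "L_norm (V n g) \<le> L_norm (\<lambda>x. 2 * sigma (2 * n - 1) g x) + L_norm (sigma (n - 1) g)"
    unfolding V_def[abs_def]
    by (rule L_norm_diff) (intro absolutely_integrable_continuous_real continuous_intros)+
  also have "\<dots> \<le> 2 * L_norm g + L_norm g"
    unfolding L_norm_cmult using sigma_L[OF g] by (intro add_mono) auto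
  finally show ?thesis by simp
qed

definition mu :: "nat \<Rightarrow> int \<Rightarrow> real" where
  "mu n k = 2 * lam (2 * n - 1) k - (if \<bar>k\<bar> \<le> int n - 1 then lam (n - 1) k else 0)"

lemma V_expand:
  assumes "n \<ge> 1"
  shows "V n g x = (\<Sum>k\<in>{-int (2*n-1)..int (2*n-1)}. of_real (mu n k) * fourier_coeff g k * ee k x)"
proof -
  have sub: "{-int (n-1)..int (n-1)} \<subseteq> {-int (2*n-1)..int (2*n-1)}" by auto
  have "sigma (n - 1) g x = (\<Sum>k\<in>{-int (2*n-1)..int (2*n-1)}. of_real (if \<bar>k\<bar> \<le> int n - 1 then lam (n - 1) k else 0) * fourier_coeff g k * ee k x)"
    unfolding sigma_def
    by (rule sum.mono_neutral_cong_left) (use sub assms in auto)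
  then show ?thesis
    unfolding V_def sigma_def mu_def
    by (simp add: sum_distrib_left sum_subtractf[symmetric] algebra_simps)
qed

lemma mu_low: assumes "n \<ge> 1" "\<bar>k\<bar> \<le> int n" shows "mu n k = 1"
proof (cases "\<bar>k\<bar> \<le> int n - 1")
  case True
  then show ?thesis using assms unfolding mu_def lam_def by (simp add: of_nat_diff field_simps)
next
  case False
  then have "\<bar>k\<bar> = int n" using assms by auto
  then have "\<bar>real_of_int k\<bar> = real n" by (metis of_int_abs of_int_of_nat_eq)
  then show ?thesis using assms False unfolding mu_def lam_def by (simp add: of_nat_diff field_simps)
qed

lemma mu_high: assumes "n \<ge> 1" "\<bar>k\<bar> > int n" shows "mu n k = 2 - \<bar>real_of_int k\<bar> / real n"
  using assms unfolding mu_def lam_def by (simp add: of_nat_diff field_simps)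


lemma int_w_half:
  assumes a: "0 < a" "a \<le> 1"
  shows "((\<lambda>x. 1 / max \<bar>x\<bar> a) has_integral (1 + (ln pi - ln a))) {0..pi}"
proof -
  have api: "a \<le> pi" using a pi_ge_two by linarith
  have h1: "((\<lambda>x. 1 / max \<bar>x\<bar> a) has_integral 1) {0..a}"
  proof (rule has_integral_eq[of _ "\<lambda>x. 1 / a"])
    show "((\<lambda>x. 1 / a) has_integral 1) {0..a}"
      using has_integral_const_real[of "1/a" 0 a] a by simp
  qed auto
  have h2: "((\<lambda>x. 1 / max \<bar>x\<bar> a) has_integral (ln pi - ln a)) {a..pi}"
  proof (rule has_integral_eq[of _ "\<lambda>x. 1 / x"])
    show "((\<lambda>x. 1 / x) has_integral (ln pi - ln a)) {a..pi}"
    proof (rule fundamental_theorem_of_calculus[OF api])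
      fix x assume "x \<in> {a..pi}"
      then have "x > 0" using a by auto
      then show "(ln has_vector_derivative 1 / x) (at x within {a..pi})"
        using DERIV_ln_divide[of x] by (simp add: has_real_derivative_iff_has_vector_derivative[symmetric] has_field_derivative_at_within)
    qed
  qed (use a in auto)
  show ?thesis by (rule has_integral_combine[OF _ api h1 h2]) (use a in auto)
qed

lemma int_w:
  assumes a: "0 < a" "a \<le> 1"
  shows "((\<lambda>x. 1 / max \<bar>x\<bar> a) has_integral 2 * (1 + (ln pi - ln a))) {-pi..pi}"
proof -
  have r: "((\<lambda>x. 1 / max \<bar>x\<bar> a) has_integral (1 + (ln pi - ln a))) {-pi..0}"
  proof -
    have "((\<lambda>x. 1 / max \<bar>-x\<bar> a) has_integral (1 + (ln pi - ln a))) {-pi..-0}"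
      using int_w_half[OF a] by (subst has_integral_reflect_real) 
    then show ?thesis by simp
  qed
  have "((\<lambda>x. 1 / max \<bar>x\<bar> a) has_integral ((1 + (ln pi - ln a)) + (1 + (ln pi - ln a)))) {-pi..pi}"
    by (rule has_integral_combine[OF _ _ r int_w_half[OF a]]) auto
  then show ?thesis by (simp add: algebra_simps)
qed

lemma VS_expand:
  assumes "n \<ge> 1"
  shows "V n f x - partial_sum f n x = (\<Sum>k\<in>{Suc n..2*n-1}.
     of_real (mu n (int k)) * fourier_coeff f (int k) * ee (int k) x + of_real (mu n (- int k)) * fourier_coeff f (- int k) * ee (- int k) x)"
proof -
  have "V n f x = (\<Sum>k\<in>{-int n..int n}. of_real (mu n k) * fourier_coeff f k * ee k x) + (\<Sum>k\<in>{Suc n..2*n-1}.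
     of_real (mu n (int k)) * fourier_coeff f (int k) * ee (int k) x + of_real (mu n (- int k)) * fourier_coeff f (- int k) * ee (- int k) x)"
    unfolding V_expand[OF assms] using assms
    by (subst sum_sym_split[of n]) auto
  moreover have "(\<Sum>k\<in>{-int n..int n}. of_real (mu n k) * fourier_coeff f k * ee k x) = partial_sum f n x"
    unfolding partial_sum_def ee_def using mu_low[OF assms] by (intro sum.cong) auto
  ultimately show ?thesis by simp
qed

lemma psum_bound:
  assumes "\<bar>y\<bar> \<le> pi" "n \<ge> 1" "Suc n \<le> k" "k \<le> 2 * n"
  shows "norm (\<Sum>l=Suc n..k. ee (int l) y) \<le> 8 / max \<bar>y\<bar> (1 / real n)"
proof -
  have c: "norm (\<Sum>l=Suc n..k. ee (int l) y) \<le> real n"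
  proof -
    have "norm (\<Sum>l=Suc n..k. ee (int l) y) \<le> (\<Sum>l=Suc n..k. norm (ee (int l) y))" by (rule norm_sum)
    also have "\<dots> = real (k - n)" using assms by simp
    also have "\<dots> \<le> real n" using assms by simp
    finally show ?thesis .
  qed
  show ?thesis
  proof (cases "\<bar>y\<bar> \<ge> 1 / real n")
    case True
    then have "y \<noteq> 0" "\<bar>y\<bar> > 0" using assms by (auto simp: field_simps)
    then show ?thesis using True geom_nat_bound[of y "Suc n" k] assms by (simp add: max_def)
  next
    case False
    then have "max \<bar>y\<bar> (1 / real n) = 1 / real n" by simp
    then show ?thesis using c assms by simp
  qed
qed

lemma var_bound:
  fixes d :: "nat \<Rightarrow> complex"
  assumes K: "\<forall>m\<ge>1. (\<Sum>n=m..2*m. norm (d n - d (Suc n))) \<le> K * (norm (d m) + norm (d (2*m)))"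
    and Kpos: "K > 0" and n: "n \<ge> 1"
  defines "u \<equiv> \<lambda>k. complex_of_real (2 - real k / real n) * d k"
  shows "norm (u (2 * n)) + (\<Sum>k=Suc n..<2*n. norm (u k - u (Suc k))) \<le> (1 + 2 * K) * (norm (d n) + norm (d (2 * n)))"
proof -
  have Kb: "(\<Sum>i=n..2*n. norm (d i - d (Suc i))) \<le> K * (norm (d n) + norm (d (2*n)))" using K n by auto
  have mx: "norm (d k) \<le> (1 + K) * (norm (d n) + norm (d (2 * n)))" if "n \<le> k" "k \<le> 2 * n" for k
  proof -
    have A: "norm (d k) \<le> norm (d n) + (\<Sum>i=n..<k. norm (d i - d (Suc i)))" by (rule d_bound[OF that(1)])
    have B: "(\<Sum>i=n..<k. norm (d i - d (Suc i))) \<le> (\<Sum>i=n..2*n. norm (d i - d (Suc i)))"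
      using that by (intro sum_mono2) auto
    have C: "norm (d n) + K * (norm (d n) + norm (d (2*n))) \<le> (1 + K) * (norm (d n) + norm (d (2 * n)))"
      by (simp add: algebra_simps)
    show ?thesis using A B C Kb by linarith
  qed
  have u2n: "u (2 * n) = 0" unfolding u_def using n by simp
  have step: "norm (u k - u (Suc k)) \<le> norm (d k - d (Suc k)) + norm (d (Suc k)) / real n"
    if "Suc n \<le> k" "k < 2 * n" for k
  proof -
    have "u k - u (Suc k) = complex_of_real (2 - real k / real n) * (d k - d (Suc k)) + complex_of_real (1 / real n) * d (Suc k)"
      unfolding u_def using n by (simp add: algebra_simps add_divide_distrib diff_divide_distrib)
    then have "norm (u k - u (Suc k)) \<le> \<bar>2 - real k / real n\<bar> * norm (d k - d (Suc k)) + norm (d (Suc k)) / real n"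
      by (metis (no_types, lifting) norm_triangle_ineq norm_mult norm_of_real abs_of_nonneg divide_nonneg_nonneg of_nat_0_le_iff zero_le_one mult.commute divide_inverse mult_1)
    moreover have "\<bar>2 - real k / real n\<bar> \<le> 1"
    proof -
      have "real k / real n \<ge> 1" "real k / real n \<le> 2" using that n by (auto simp: field_simps)
      then show ?thesis by simp
    qed
    ultimately show ?thesis by (smt (verit) mult_right_mono norm_ge_zero mult_left_le_one_le)
  qed
  have "(\<Sum>k=Suc n..<2*n. norm (u k - u (Suc k))) \<le> (\<Sum>k=Suc n..<2*n. norm (d k - d (Suc k)) + norm (d (Suc k)) / real n)"
    using step by (intro sum_mono) auto
  also have "\<dots> = (\<Sum>k=Suc n..<2*n. norm (d k - d (Suc k))) + (\<Sum>k=Suc n..<2*n. norm (d (Suc k)) / real n)"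
    by (rule sum.distrib)
  also have "(\<Sum>k=Suc n..<2*n. norm (d k - d (Suc k))) \<le> K * (norm (d n) + norm (d (2*n)))"
    by (rule order_trans[OF _ Kb], rule sum_mono2) auto
  also have "(\<Sum>k=Suc n..<2*n. norm (d (Suc k)) / real n) \<le> (\<Sum>k=Suc n..<2*n. (1 + K) * (norm (d n) + norm (d (2 * n))) / real n)"
    using mx by (intro sum_mono divide_right_mono) auto
  also have "\<dots> = real (2 * n - Suc n) * ((1 + K) * (norm (d n) + norm (d (2 * n))) / real n)" by simp
  also have "\<dots> \<le> (1 + K) * (norm (d n) + norm (d (2 * n)))"
  proof -
    have "real (2 * n - Suc n) \<le> real n" by simp
    moreover have "(1 + K) * (norm (d n) + norm (d (2 * n))) \<ge> 0" using Kpos by simp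
    ultimately show ?thesis using n by (simp add: field_simps mult_right_mono)
  qed
  finally show ?thesis unfolding u2n by (simp add: algebra_simps)
qed


lemma part_bound:
  assumes s: "s = 1 \<or> s = -1" and n: "n \<ge> 1" and x: "\<bar>x\<bar> \<le> pi"
    and K: "\<forall>m\<ge>1. (\<Sum>k=m..2*m. norm (fourier_coeff f (s * int k) - fourier_coeff f (s * int (Suc k)))) \<le>
                K * (norm (fourier_coeff f (s * int m)) + norm (fourier_coeff f (s * int (2*m))))"
    and Kpos: "K > 0"
  shows "norm (\<Sum>k\<in>{Suc n..2*n-1}. of_real (mu n (s * int k)) * fourier_coeff f (s * int k) * ee (s * int k) x)
    \<le> (1 + 2 * K) * (norm (fourier_coeff f (s * int n)) + norm (fourier_coeff f (s * int (2 * n)))) * (8 / max \<bar>x\<bar> (1 / real n))"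
proof -
  define d where "d k = fourier_coeff f (s * int k)" for k
  define u where "u k = complex_of_real (2 - real k / real n) * d k" for k
  define y where "y = of_int s * x"
  have y: "\<bar>y\<bar> = \<bar>x\<bar>" unfolding y_def using s by auto
  have eq: "(\<Sum>k\<in>{Suc n..2*n-1}. of_real (mu n (s * int k)) * fourier_coeff f (s * int k) * ee (s * int k) x)
      = (\<Sum>k=Suc n..2*n. u k * ee (int k) y)"
  proof -
    have u2n: "u (2 * n) = 0" unfolding u_def using n by simp
    have e: "{Suc n..2*n} = insert (2*n) {Suc n..2*n-1}" using n by auto
    have "(\<Sum>k=Suc n..2*n. u k * ee (int k) y) = (\<Sum>k=Suc n..2*n-1. u k * ee (int k) y)"
      unfolding e using u2n by (subst sum.insert) auto
    also have "\<dots> = (\<Sum>k\<in>{Suc n..2*n-1}. of_real (mu n (s * int k)) * fourier_coeff f (s * int k) * ee (s * int k) x)"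
    proof (intro sum.cong refl)
      fix k assume k: "k \<in> {Suc n..2*n-1}"
      have "\<bar>s * int k\<bar> = int k" using s by auto
      moreover have "\<bar>real_of_int s * real k\<bar> = real k" using s by auto
      ultimately have "mu n (s * int k) = 2 - real k / real n"
        using mu_high[OF n, of "s * int k"] k by simp
      then show "u k * ee (int k) y = of_real (mu n (s * int k)) * fourier_coeff f (s * int k) * ee (s * int k) x"
        unfolding u_def d_def y_def ee_scale by simp
    qed
    finally show ?thesis by simp
  qed
  have "norm (\<Sum>k=Suc n..2*n. u k * ee (int k) y) \<le> (norm (u (2 * n)) + (\<Sum>k=Suc n..<2*n. norm (u k - u (Suc k)))) * (8 / max \<bar>y\<bar> (1 / real n))"
    using n by (intro abel_bound psum_bound) (use x y in auto)
  also have "\<dots> \<le> (1 + 2 * K) * (norm (d n) + norm (d (2 * n))) * (8 / max \<bar>y\<bar> (1 / real n))"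
  proof (rule mult_right_mono)
    show "norm (u (2 * n)) + (\<Sum>k=Suc n..<2*n. norm (u k - u (Suc k))) \<le> (1 + 2 * K) * (norm (d n) + norm (d (2 * n)))"
      unfolding u_def by (rule var_bound[OF _ Kpos n]) (use K in \<open>simp add: d_def\<close>)
    show "0 \<le> 8 / max \<bar>y\<bar> (1 / real n)" by simp
  qed
  finally show ?thesis unfolding eq y d_def .
qed

lemma V_cont: "continuous_on A (V n g)"
  unfolding V_def by (intro continuous_intros)

lemma VS_L:
  assumes n: "n \<ge> 1"
    and Kp: "\<forall>m\<ge>1. (\<Sum>k=m..2*m. norm (fourier_coeff f (int k) - fourier_coeff f (int (Suc k)))) \<le>
                Kp * (norm (fourier_coeff f (int m)) + norm (fourier_coeff f (int (2*m))))" "Kp > 0"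
    and Km: "\<forall>m\<ge>1. (\<Sum>k=m..2*m. norm (fourier_coeff f (- int k) - fourier_coeff f (- int (Suc k)))) \<le>
                Km * (norm (fourier_coeff f (- int m)) + norm (fourier_coeff f (- int (2*m))))" "Km > 0"
  shows "L_norm (\<lambda>x. V n f x - partial_sum f n x) \<le>
     ((1 + 2 * Kp) * (norm (fourier_coeff f (int n)) + norm (fourier_coeff f (int (2 * n)))) +
      (1 + 2 * Km) * (norm (fourier_coeff f (- int n)) + norm (fourier_coeff f (- int (2 * n))))) * (16 * (1 + ln pi + ln (real n)))"
proof -
  define Bp where "Bp = (1 + 2 * Kp) * (norm (fourier_coeff f (int n)) + norm (fourier_coeff f (int (2 * n))))"
  define Bm where "Bm = (1 + 2 * Km) * (norm (fourier_coeff f (- int n)) + norm (fourier_coeff f (- int (2 * n))))"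
  have a: "0 < 1 / real n" "1 / real n \<le> 1" using n by auto
  have hi: "((\<lambda>x. (Bp + Bm) * 8 * (1 / max \<bar>x\<bar> (1 / real n))) has_integral ((Bp + Bm) * 8 * (2 * (1 + (ln pi - ln (1 / real n)))))) {-pi..pi}"
    by (rule has_integral_mult_right, rule int_w[OF a])
  have pt: "norm (V n f x - partial_sum f n x) \<le> (Bp + Bm) * 8 * (1 / max \<bar>x\<bar> (1 / real n))" if x: "x \<in> {-pi..pi}" for x
  proof -
    have x': "\<bar>x\<bar> \<le> pi" using x by auto
    have "V n f x - partial_sum f n x =
      (\<Sum>k\<in>{Suc n..2*n-1}. of_real (mu n (1 * int k)) * fourier_coeff f (1 * int k) * ee (1 * int k) x) +
      (\<Sum>k\<in>{Suc n..2*n-1}. of_real (mu n ((-1) * int k)) * fourier_coeff f ((-1) * int k) * ee ((-1) * int k) x)"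
      unfolding VS_expand[OF n] sum.distrib by simp
    also have "norm \<dots> \<le> Bp * (8 / max \<bar>x\<bar> (1 / real n)) + Bm * (8 / max \<bar>x\<bar> (1 / real n))"
    proof (rule order_trans[OF norm_triangle_ineq add_mono])
      show "norm (\<Sum>k\<in>{Suc n..2*n-1}. of_real (mu n (1 * int k)) * fourier_coeff f (1 * int k) * ee (1 * int k) x) \<le> Bp * (8 / max \<bar>x\<bar> (1 / real n))"
        using part_bound[of 1 n x f Kp] Kp n x' unfolding Bp_def by simp
      show "norm (\<Sum>k\<in>{Suc n..2*n-1}. of_real (mu n ((-1) * int k)) * fourier_coeff f ((-1) * int k) * ee ((-1) * int k) x) \<le> Bm * (8 / max \<bar>x\<bar> (1 / real n))"
        using part_bound[of "-1" n x f Km] Km n x' unfolding Bm_def by simp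
    qed
    finally show ?thesis by (simp add: algebra_simps)
  qed
  have "L_norm (\<lambda>x. V n f x - partial_sum f n x) \<le> integral {-pi..pi} (\<lambda>x. (Bp + Bm) * 8 * (1 / max \<bar>x\<bar> (1 / real n)))"
    by (rule L_norm_le[OF _ has_integral_integrable[OF hi] pt])
       (unfold partial_sum_tp, intro absolutely_integrable_continuous_real continuous_intros V_cont tp_cont)
  also have "\<dots> = (Bp + Bm) * (16 * (1 + ln pi + ln (real n)))"
    using integral_unique[OF hi] n by (simp add: ln_div algebra_simps)
  finally show ?thesis unfolding Bp_def Bm_def .
qed


lemma best_approx_le: "best_approx f n \<le> L_norm (\<lambda>x. f x - partial_sum f n x)"
  unfolding best_approx_def partial_sum_def
  by (rule cINF_lower[where x="fourier_coeff f"]) (auto intro!: bdd_belowI2 L_norm_nonneg)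

lemma best_approx_nonneg: "best_approx f n \<ge> 0"
  unfolding best_approx_def by (rule cINF_greatest) (auto intro: L_norm_nonneg)

lemma V_diff:
  assumes "f absolutely_integrable_on {-pi..pi}" "g absolutely_integrable_on {-pi..pi}"
  shows "V n (\<lambda>x. f x - g x) x = V n f x - V n g x"
proof -
  have s: "sigma N (\<lambda>x. f x - g x) x = sigma N f x - sigma N g x" for N
    unfolding sigma_def fc_diff[OF assms] sum_subtractf[symmetric]
    by (intro sum.cong refl) (simp add: algebra_simps)
  show ?thesis unfolding V_def s by (simp add: algebra_simps)
qed

lemma V_tp:
  assumes n: "n \<ge> 1"
  shows "V n (tp a {-int n..int n}) x = tp a {-int n..int n} x"
proof -
  have "V n (tp a {-int n..int n}) x = (\<Sum>k\<in>{-int (2*n-1)..int (2*n-1)}. of_real (mu n k) * (if k \<in> {-int n..int n} then a k else 0) * ee k x)"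
    unfolding V_expand[OF n] fc_tp[OF finite_atLeastAtMost_int] ..
  also have "\<dots> = (\<Sum>k\<in>{-int n..int n}. of_real (mu n k) * a k * ee k x)"
    by (rule sum.mono_neutral_cong_right) (use n in auto)
  also have "\<dots> = tp a {-int n..int n} x"
    unfolding tp_def using mu_low[OF n] by (intro sum.cong) auto
  finally show ?thesis .
qed

lemma fV_bound:
  assumes f: "f absolutely_integrable_on {-pi..pi}" and n: "n \<ge> 1"
  shows "L_norm (\<lambda>x. f x - V n f x) \<le> 4 * best_approx f n"
proof -
  have "L_norm (\<lambda>x. f x - V n f x) / 4 \<le> best_approx f n"
    unfolding best_approx_def
  proof (rule cINF_greatest)
    fix a :: "int \<Rightarrow> complex"
    define T where "T = tp a {-int n..int n}"
    have T: "T absolutely_integrable_on {-pi..pi}" unfolding T_def by (rule tp_absint)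
    have fT: "(\<lambda>x. f x - T x) absolutely_integrable_on {-pi..pi}" by (rule set_integral_diff(1)[OF f T])
    have eq: "f x - V n f x = (f x - T x) - V n (\<lambda>x. f x - T x) x" for x
    proof -
      have "V n (\<lambda>x. f x - T x) x = V n f x - V n T x" by (rule V_diff[OF f T])
      also have "V n T x = T x" unfolding T_def by (rule V_tp[OF n])
      finally show ?thesis by simp
    qed
    have "L_norm (\<lambda>x. f x - V n f x) \<le> L_norm (\<lambda>x. f x - T x) + L_norm (V n (\<lambda>x. f x - T x))"
      unfolding eq by (rule L_norm_diff[OF fT]) (intro absolutely_integrable_continuous_real V_cont)
    also have "\<dots> \<le> L_norm (\<lambda>x. f x - T x) + 3 * L_norm (\<lambda>x. f x - T x)"
      using V_L[OF fT] by simp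
    finally have "L_norm (\<lambda>x. f x - V n f x) / 4 \<le> L_norm (\<lambda>x. f x - T x)" by simp
    moreover have "T = (\<lambda>x. \<Sum>k = - int n..int n. a k * exp (\<i> * of_int k * of_real x))"
      unfolding T_def tp_def ee_def ..
    ultimately show "L_norm (\<lambda>x. f x - V n f x) / 4 \<le> L_norm (\<lambda>x. f x - (\<Sum>k = - int n..int n. a k * exp (\<i> * of_int k * of_real x)))"
      by simp
  qed simp
  then show ?thesis by simp
qed

lemma psi_mono:
  fixes \<psi> :: "nat \<Rightarrow> real"
  assumes dec: "\<forall>n\<ge>1. \<psi> (Suc n) \<le> \<psi> n" and ab: "1 \<le> a" "a \<le> b"
  shows "\<psi> b \<le> \<psi> a"
  using ab(2)
proof (induction b rule: dec_induct)
  case base then show ?case by simp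
next
  case (step b)
  then show ?case using dec ab(1) by (meson order_trans)
qed

lemma ln_pi_le: "ln pi \<le> 2"
proof -
  have e: "2 \<le> exp (1::real)" using exp_ge_add_one_self[of 1] by simp
  have "exp (2::real) = exp 1 * exp 1" by (simp add: exp_add[symmetric])
  also have "\<dots> \<ge> 2 * 2" using e by (intro mult_mono) auto
  finally have "4 \<le> exp (2::real)" by simp
  then have "pi \<le> exp 2" using pi_less_4 by simp
  then have "ln pi \<le> ln (exp 2)" by (subst ln_le_cancel_iff) auto
  then show ?thesis by simp
qed

lemma ln_ge_1: "real n \<ge> 3 \<Longrightarrow> ln (real n) \<ge> 1"
  using exp_le by (subst ln_ge_iff) auto


lemma coef_from_err:
  fixes \<psi> :: "nat \<Rightarrow> real"
  assumes f: "f absolutely_integrable_on {-pi..pi}" and s: "s = 1 \<or> s = -1"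
    and sec: "\<forall>n\<ge>1. fourier_coeff f (s * int n) \<in> sector \<theta>" and th: "0 \<le> \<theta>" "\<theta> < pi / 2"
    and K: "\<forall>m\<ge>1. (\<Sum>k=m..2*m. norm (fourier_coeff f (s * int k) - fourier_coeff f (s * int (Suc k)))) \<le>
                K * (norm (fourier_coeff f (s * int m)) + norm (fourier_coeff f (s * int (2*m))))"
    and Kpos: "K > 0"
    and err: "\<forall>n\<ge>N0. L_norm (\<lambda>x. f x - partial_sum f n x) \<le> C * \<psi> n" and C: "C > 0"
    and dec: "\<forall>n\<ge>1. \<psi> (Suc n) \<le> \<psi> n"
    and doub: "\<forall>n\<ge>N1. \<psi> n \<le> D * \<psi> (2 * n)" and D: "D > 0"
  shows "\<exists>C' N. \<forall>n\<ge>N. norm (fourier_coeff f (s * int n)) * ln (real n) \<le> C' * \<psi> n"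
proof -
  define d where "d k = fourier_coeff f (s * int k)" for k
  have cpos: "cos \<theta> > 0" using th by (intro cos_gt_zero_pi) auto
  define A where "A = HB * C / (cos \<theta> * (2 * pi))"
  have HBpos: "HB > 0" unfolding HB_def using pi_gt_zero by linarith
  have Apos: "A > 0" unfolding A_def using HBpos C cpos by simp
  have Sb: "Ssum d q \<le> A * \<psi> q" if "q \<ge> N0" for q
  proof -
    have "cos \<theta> * (2 * pi) * Ssum d q \<le> HB * L_norm (\<lambda>x. f x - partial_sum f q x)"
      unfolding d_def by (rule Ssum_bound[OF f s sec th])
    also have "\<dots> \<le> HB * (C * \<psi> q)" using err that HBpos by (intro mult_left_mono) auto
    finally show ?thesis unfolding A_def using cpos by (simp add: field_simps)
  qed
  define N where "N = 2 * N0 + 2 * N1 + 4"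
  show ?thesis
  proof (intro exI allI impI)
    fix n assume nN: "N \<le> n"
    define p where "p = n div 2"
    have p: "p \<ge> 1" "2 * p \<le> n" "n \<le> 2 * p + 1" "p \<ge> N0" "p \<ge> N1" using nN unfolding p_def N_def by auto
    have key: "norm (d n) * harm p \<le> (1 + K) * (Ssum d p + 2 * Ssum d (2 * p))"
      by (rule nbvs_key[OF _ Kpos p(1-3)]) (use K in \<open>simp add: d_def\<close>)
    have lnb: "ln (real n) \<le> 2 * harm p"
    proof -
      have "real n \<le> 2 * real p + 1" using p(3) by linarith
      moreover have "2 * real p + 1 \<le> (real p + 1)^2" by (simp add: power2_eq_square algebra_simps)
      ultimately have "real n \<le> (real p + 1)^2" by linarith
      then have "ln (real n) \<le> ln ((real p + 1)^2)" using p by (subst ln_le_cancel_iff) auto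
      also have "\<dots> = 2 * ln (real p + 1)" by (simp add: ln_realpow)
      also have "\<dots> \<le> 2 * harm p" using ln_le_harm[of p] by simp
      finally show ?thesis .
    qed
    have psi1: "\<psi> p \<le> D * D * \<psi> n"
    proof -
      have "\<psi> p \<le> D * \<psi> (2 * p)" using doub p by auto
      also have "\<psi> (2 * p) \<le> D * \<psi> (2 * (2 * p))" using doub[rule_format, of "2 * p"] p by linarith
      also have "\<psi> (2 * (2 * p)) \<le> \<psi> n" using p by (intro psi_mono[OF dec]) auto
      finally show ?thesis using D by (simp add: mult_left_mono mult.assoc)
    qed
    have psi2: "\<psi> (2 * p) \<le> D * \<psi> n"
    proof -
      have "\<psi> (2 * p) \<le> D * \<psi> (2 * (2 * p))" using doub[rule_format, of "2 * p"] p by linarith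
      also have "\<psi> (2 * (2 * p)) \<le> \<psi> n" using p by (intro psi_mono[OF dec]) auto
      finally show ?thesis using D by (simp add: mult_left_mono)
    qed
    have "norm (d n) * ln (real n) \<le> norm (d n) * (2 * harm p)"
      by (intro mult_left_mono lnb) auto
    also have "\<dots> = 2 * (norm (d n) * harm p)" by simp
    also have "\<dots> \<le> 2 * ((1 + K) * (Ssum d p + 2 * Ssum d (2 * p)))" using key by simp
    also have "\<dots> \<le> 2 * ((1 + K) * (A * \<psi> p + 2 * (A * \<psi> (2 * p))))"
      using Sb[of p] Sb[of "2 * p"] p Kpos by (intro mult_left_mono add_mono) auto
    also have "\<dots> \<le> 2 * ((1 + K) * (A * (D * D * \<psi> n) + 2 * (A * (D * \<psi> n))))"
      using psi1 psi2 Kpos Apos by (intro mult_left_mono add_mono) auto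
    also have "\<dots> = (2 * (1 + K) * A * (D * D + 2 * D)) * \<psi> n" by (simp add: algebra_simps)
    finally show "norm (fourier_coeff f (s * int n)) * ln (real n) \<le> (2 * (1 + K) * A * (D * D + 2 * D)) * \<psi> n"
      unfolding d_def .
  qed
qed


lemma err_from:
  fixes \<psi> :: "nat \<Rightarrow> real"
  assumes f: "f absolutely_integrable_on {-pi..pi}"
    and Kp: "\<forall>m\<ge>1. (\<Sum>k=m..2*m. norm (fourier_coeff f (int k) - fourier_coeff f (int (Suc k)))) \<le>
                Kp * (norm (fourier_coeff f (int m)) + norm (fourier_coeff f (int (2*m))))" "Kp > 0"
    and Km: "\<forall>m\<ge>1. (\<Sum>k=m..2*m. norm (fourier_coeff f (- int k) - fourier_coeff f (- int (Suc k)))) \<le>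
                Km * (norm (fourier_coeff f (- int m)) + norm (fourier_coeff f (- int (2*m))))" "Km > 0"
    and E: "\<forall>n\<ge>N0. best_approx f n \<le> C1 * \<psi> n"
    and coef: "\<forall>k::int. \<bar>k\<bar> \<ge> M \<longrightarrow> norm (fourier_coeff f k) * ln \<bar>real_of_int k\<bar> \<le> C2 * \<psi> (nat \<bar>k\<bar>)"
    and C2: "C2 \<ge> 0"
    and dec: "\<forall>n\<ge>1. \<psi> (Suc n) \<le> \<psi> n"
    and n: "n \<ge> N0" "int n \<ge> M" "n \<ge> 3"
  shows "L_norm (\<lambda>x. f x - partial_sum f n x) \<le> (4 * C1 + 128 * C2 * ((1 + 2 * Kp) + (1 + 2 * Km))) * \<psi> n"
proof -
  have n1: "n \<ge> 1" using n by simp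
  have Vc: "V n f absolutely_integrable_on {-pi..pi}" by (intro absolutely_integrable_continuous_real V_cont)
  have Sc: "partial_sum f n absolutely_integrable_on {-pi..pi}" unfolding partial_sum_tp by (rule tp_absint)
  have "L_norm (\<lambda>x. f x - partial_sum f n x) = L_norm (\<lambda>x. (f x - V n f x) + (V n f x - partial_sum f n x))" by simp
  also have "\<dots> \<le> L_norm (\<lambda>x. f x - V n f x) + L_norm (\<lambda>x. V n f x - partial_sum f n x)"
    by (rule L_norm_triangle; rule set_integral_diff(1)) (use f Vc Sc in auto)
  also have "L_norm (\<lambda>x. f x - V n f x) \<le> 4 * (C1 * \<psi> n)"
    using fV_bound[OF f n1] E n by (meson mult_left_mono order_trans zero_le_numeral)
  also have "L_norm (\<lambda>x. V n f x - partial_sum f n x) \<le> 128 * C2 * ((1 + 2 * Kp) + (1 + 2 * Km)) * \<psi> n"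
  proof -
    define a where "a = norm (fourier_coeff f (int n))"
    define b where "b = norm (fourier_coeff f (int (2 * n)))"
    define a' where "a' = norm (fourier_coeff f (- int n))"
    define b' where "b' = norm (fourier_coeff f (- int (2 * n)))"
    have lnpos: "ln (real n) \<ge> 1" using ln_ge_1 n by simp
    have L1: "1 + ln pi + ln (real n) \<le> 4 * ln (real n)" using ln_pi_le lnpos by linarith
    have psi2: "\<psi> (2 * n) \<le> \<psi> n" using n by (intro psi_mono[OF dec]) auto
    have ca: "a * ln (real n) \<le> C2 * \<psi> n" using coef[rule_format, of "int n"] n unfolding a_def by simp
    have ca': "a' * ln (real n) \<le> C2 * \<psi> n" using coef[rule_format, of "- int n"] n unfolding a'_def by simp
    have nat2: "nat (2 * int n) = 2 * n" by simp
    have lnle: "ln (real n) \<le> ln (real (2 * n))" using n by (subst ln_le_cancel_iff) auto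
    have cb: "b * ln (real n) \<le> C2 * \<psi> n"
    proof -
      have "b * ln (real n) \<le> b * ln (real (2 * n))" unfolding b_def by (intro mult_left_mono lnle) auto
      also have "\<dots> \<le> C2 * \<psi> (2 * n)" using coef[rule_format, of "int (2 * n)"] n nat2 unfolding b_def by simp
      also have "\<dots> \<le> C2 * \<psi> n" using psi2 C2 by (intro mult_left_mono) auto
      finally show ?thesis .
    qed
    have cb': "b' * ln (real n) \<le> C2 * \<psi> n"
    proof -
      have "b' * ln (real n) \<le> b' * ln (real (2 * n))" unfolding b'_def by (intro mult_left_mono lnle) auto
      also have "\<dots> \<le> C2 * \<psi> (2 * n)" using coef[rule_format, of "- int (2 * n)"] n nat2 unfolding b'_def by simp
      also have "\<dots> \<le> C2 * \<psi> n" using psi2 C2 by (intro mult_left_mono) auto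
      finally show ?thesis .
    qed
    have B0: "0 \<le> (1 + 2 * Kp) * (a + b) + (1 + 2 * Km) * (a' + b')"
      using Kp Km unfolding a_def b_def a'_def b'_def by (intro add_nonneg_nonneg mult_nonneg_nonneg) auto
    have "L_norm (\<lambda>x. V n f x - partial_sum f n x) \<le> ((1 + 2 * Kp) * (a + b) + (1 + 2 * Km) * (a' + b')) * (16 * (1 + ln pi + ln (real n)))"
      unfolding a_def b_def a'_def b'_def by (rule VS_L[OF n1 Kp Km])
    also have "\<dots> \<le> ((1 + 2 * Kp) * (a + b) + (1 + 2 * Km) * (a' + b')) * (16 * (4 * ln (real n)))"
      using L1 B0 by (intro mult_left_mono) auto
    also have "\<dots> = 64 * ((1 + 2 * Kp) * (a * ln (real n) + b * ln (real n)) + (1 + 2 * Km) * (a' * ln (real n) + b' * ln (real n)))"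
      by (simp add: algebra_simps)
    also have "\<dots> \<le> 64 * ((1 + 2 * Kp) * (C2 * \<psi> n + C2 * \<psi> n) + (1 + 2 * Km) * (C2 * \<psi> n + C2 * \<psi> n))"
      using ca cb ca' cb' Kp Km by (intro mult_left_mono add_mono) auto
    also have "\<dots> = 128 * C2 * ((1 + 2 * Kp) + (1 + 2 * Km)) * \<psi> n" by (simp add: algebra_simps)
    finally show ?thesis .
  qed
  finally show ?thesis by (simp add: algebra_simps)
qed


theorem theorem6:
  fixes f :: "real \<Rightarrow> complex" and \<psi> :: "nat \<Rightarrow> real"
  assumes f: "in_L2pi f"
    and \<psi>_pos: "\<forall>n\<ge>1. \<psi> n > 0"
    and \<psi>_dec: "\<forall>n\<ge>1. \<psi> (Suc n) \<le> \<psi> n"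
    and \<psi>_lim: "\<psi> \<longlonglongrightarrow> 0"
    and \<psi>_doub: "(\<lambda>n. \<psi> n) \<in> O(\<lambda>n. \<psi> (2 * n))"
    and nb_pos: "NBVS (\<lambda>n. fourier_coeff f (int n))"
    and nb_neg: "NBVS (\<lambda>n. fourier_coeff f (- int n))"
  shows "(\<lambda>n. L_norm (\<lambda>x. f x - partial_sum f n x)) \<in> O(\<psi>) \<longleftrightarrow>
         ((\<lambda>n. best_approx f n) \<in> O(\<psi>) \<and>
          (\<lambda>n::int. norm (fourier_coeff f n) * ln \<bar>real_of_int n\<bar>) \<in> O[cofinite](\<lambda>n. \<psi> (nat \<bar>n\<bar>)))"
proof -
  have fabs: "f absolutely_integrable_on {-pi..pi}" using f unfolding in_L2pi_def by blast
  obtain \<theta>p Kp where thp: "0 \<le> \<theta>p" "\<theta>p < pi / 2" "\<forall>n\<ge>1. fourier_coeff f (int n) \<in> sector \<theta>p"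
    and Kp: "Kp > 0" "\<forall>m\<ge>1. (\<Sum>n=m..2*m. norm (fourier_coeff f (int n) - fourier_coeff f (int (Suc n)))) \<le>
       Kp * (norm (fourier_coeff f (int m)) + norm (fourier_coeff f (int (2*m))))"
    using nb_pos unfolding NBVS_def by blast
  obtain \<theta>m Km where thn: "0 \<le> \<theta>m" "\<theta>m < pi / 2" "\<forall>n\<ge>1. fourier_coeff f (- int n) \<in> sector \<theta>m"
    and Km: "Km > 0" "\<forall>m\<ge>1. (\<Sum>n=m..2*m. norm (fourier_coeff f (- int n) - fourier_coeff f (- int (Suc n)))) \<le>
       Km * (norm (fourier_coeff f (- int m)) + norm (fourier_coeff f (- int (2*m))))"
    using nb_neg unfolding NBVS_def by blast
  have psiabs: "norm (\<psi> n) = \<psi> n" if "n \<ge> 1" for n using \<psi>_pos that by auto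
  show ?thesis
  proof
    assume H: "(\<lambda>n. L_norm (\<lambda>x. f x - partial_sum f n x)) \<in> O(\<psi>)"
    obtain C where C: "C > 0" "eventually (\<lambda>n. norm (L_norm (\<lambda>x. f x - partial_sum f n x)) \<le> C * norm (\<psi> n)) at_top"
      using landau_o.bigE[OF H] by blast
    obtain N0' where N0': "\<forall>n\<ge>N0'. norm (L_norm (\<lambda>x. f x - partial_sum f n x)) \<le> C * norm (\<psi> n)"
      using C(2) unfolding eventually_at_top_linorder by blast
    define N0 where "N0 = max N0' 1"
    have err: "\<forall>n\<ge>N0. L_norm (\<lambda>x. f x - partial_sum f n x) \<le> C * \<psi> n"
    proof (intro allI impI)
      fix n assume "N0 \<le> n"
      then have "n \<ge> N0'" "n \<ge> 1" unfolding N0_def by auto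
      then show "L_norm (\<lambda>x. f x - partial_sum f n x) \<le> C * \<psi> n"
        using N0' psiabs[of n] by (metis abs_ge_self order_trans real_norm_def)
    qed
    obtain D where D: "D > 0" "eventually (\<lambda>n. norm (\<psi> n) \<le> D * norm (\<psi> (2 * n))) at_top"
      using landau_o.bigE[OF \<psi>_doub] by blast
    obtain N1' where N1': "\<forall>n\<ge>N1'. norm (\<psi> n) \<le> D * norm (\<psi> (2 * n))"
      using D(2) unfolding eventually_at_top_linorder by blast
    define N1 where "N1 = max N1' 1"
    have doub: "\<forall>n\<ge>N1. \<psi> n \<le> D * \<psi> (2 * n)"
    proof (intro allI impI)
      fix n assume "N1 \<le> n"
      then have "n \<ge> N1'" "n \<ge> 1" "2 * n \<ge> 1" unfolding N1_def by auto
      then show "\<psi> n \<le> D * \<psi> (2 * n)" using N1' psiabs[of n] psiabs[of "2 * n"] by metis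
    qed
    have best: "(\<lambda>n. best_approx f n) \<in> O(\<psi>)"
    proof (rule landau_o.bigI[OF C(1)])
      show "eventually (\<lambda>n. norm (best_approx f n) \<le> C * norm (\<psi> n)) at_top"
        unfolding eventually_at_top_linorder
      proof (intro exI allI impI)
        fix n assume n: "N0 \<le> n"
        then have "n \<ge> 1" unfolding N0_def by auto
        have "norm (best_approx f n) = best_approx f n" using best_approx_nonneg by simp
        also have "\<dots> \<le> L_norm (\<lambda>x. f x - partial_sum f n x)" by (rule best_approx_le)
        also have "\<dots> \<le> C * \<psi> n" using err n by auto
        finally show "norm (best_approx f n) \<le> C * norm (\<psi> n)" using psiabs[OF \<open>n \<ge> 1\<close>] by simp
      qed
    qed
    obtain Cp Np where cp: "\<forall>n\<ge>Np. norm (fourier_coeff f (1 * int n)) * ln (real n) \<le> Cp * \<psi> n"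
      using coef_from_err[OF fabs _ _ thp(1,2) _ Kp(1) err C(1) \<psi>_dec doub D(1), of 1] thp(3) Kp(2) by auto
    obtain Cm Nm where cm: "\<forall>n\<ge>Nm. norm (fourier_coeff f ((-1) * int n)) * ln (real n) \<le> Cm * \<psi> n"
      using coef_from_err[OF fabs _ _ thn(1,2) _ Km(1) err C(1) \<psi>_dec doub D(1), of "-1"] thn(3) Km(2) by auto
    define c where "c = max Cp Cm + 1"
    have cpos: "c > 0" "Cp \<le> c" "Cm \<le> c"
    proof -
      show "Cp \<le> c" "Cm \<le> c" unfolding c_def by auto
      have "0 \<le> norm (fourier_coeff f (1 * int (max Np 1))) * ln (real (max Np 1))" by simp
      also have "\<dots> \<le> Cp * \<psi> (max Np 1)" using cp by auto
      finally have "0 \<le> Cp * \<psi> (max Np 1)" .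
      moreover have "\<psi> (max Np 1) > 0" using \<psi>_pos by simp
      ultimately have "0 \<le> Cp" by (simp add: zero_le_mult_iff)
      then show "c > 0" unfolding c_def by simp
    qed
    have coef: "(\<lambda>n::int. norm (fourier_coeff f n) * ln \<bar>real_of_int n\<bar>) \<in> O[cofinite](\<lambda>n. \<psi> (nat \<bar>n\<bar>))"
    proof (rule landau_o.bigI[OF cpos(1)])
      define B where "B = int (max Np Nm) + 1"
      have "{k. \<not> norm (norm (fourier_coeff f k) * ln \<bar>real_of_int k\<bar>) \<le> c * norm (\<psi> (nat \<bar>k\<bar>))} \<subseteq> {-B..B}"
      proof (rule subsetI, rule ccontr)
        fix k assume k: "k \<in> {k. \<not> norm (norm (fourier_coeff f k) * ln \<bar>real_of_int k\<bar>) \<le> c * norm (\<psi> (nat \<bar>k\<bar>))}"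
          and kB: "k \<notin> {-B..B}"
        define n where "n = nat \<bar>k\<bar>"
        have n: "n \<ge> Np" "n \<ge> Nm" "n \<ge> 1" using kB unfolding n_def B_def by auto
        have lnn: "ln (real n) \<ge> 0" using n by simp
        have absk: "\<bar>real_of_int k\<bar> = real n" unfolding n_def by simp
        have "norm (fourier_coeff f k) * ln (real n) \<le> c * \<psi> n"
        proof (cases "k \<ge> 0")
          case True
          then have "k = 1 * int n" unfolding n_def by simp
          then have "norm (fourier_coeff f k) * ln (real n) \<le> Cp * \<psi> n" using cp n by simp
          also have "\<dots> \<le> c * \<psi> n" using cpos \<psi>_pos n by (intro mult_right_mono) auto
          finally show ?thesis .
        next
          case False
          then have "k = (-1) * int n" unfolding n_def by simp
          then have "norm (fourier_coeff f k) * ln (real n) \<le> Cm * \<psi> n" using cm n by (simp only:)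
          also have "\<dots> \<le> c * \<psi> n" using cpos \<psi>_pos n by (intro mult_right_mono) auto
          finally show ?thesis .
        qed
        then have "norm (norm (fourier_coeff f k) * ln \<bar>real_of_int k\<bar>) \<le> c * norm (\<psi> (nat \<bar>k\<bar>))"
          unfolding absk using lnn psiabs[OF n(3)] unfolding n_def[symmetric] by simp
        then show False using k by simp
      qed
      then have "finite {k. \<not> norm (norm (fourier_coeff f k) * ln \<bar>real_of_int k\<bar>) \<le> c * norm (\<psi> (nat \<bar>k\<bar>))}"
        by (rule finite_subset) simp
      then show "eventually (\<lambda>k. norm (norm (fourier_coeff f k) * ln \<bar>real_of_int k\<bar>) \<le> c * norm (\<psi> (nat \<bar>k\<bar>))) cofinite"
        unfolding eventually_cofinite .
    qed
    show "(\<lambda>n. best_approx f n) \<in> O(\<psi>) \<and> (\<lambda>n::int. norm (fourier_coeff f n) * ln \<bar>real_of_int n\<bar>) \<in> O[cofinite](\<lambda>n. \<psi> (nat \<bar>n\<bar>))"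
      using best coef by blast
  next
    assume H: "(\<lambda>n. best_approx f n) \<in> O(\<psi>) \<and> (\<lambda>n::int. norm (fourier_coeff f n) * ln \<bar>real_of_int n\<bar>) \<in> O[cofinite](\<lambda>n. \<psi> (nat \<bar>n\<bar>))"
    obtain C1 where C1: "C1 > 0" "eventually (\<lambda>n. norm (best_approx f n) \<le> C1 * norm (\<psi> n)) at_top"
      using landau_o.bigE[of "\<lambda>n. best_approx f n"] H by blast
    obtain N0' where N0': "\<forall>n\<ge>N0'. norm (best_approx f n) \<le> C1 * norm (\<psi> n)"
      using C1(2) unfolding eventually_at_top_linorder by blast
    define N0 where "N0 = max N0' 1"
    have E: "\<forall>n\<ge>N0. best_approx f n \<le> C1 * \<psi> n"
    proof (intro allI impI)
      fix n assume "N0 \<le> n"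
      then have "n \<ge> N0'" "n \<ge> 1" unfolding N0_def by auto
      then show "best_approx f n \<le> C1 * \<psi> n"
        using N0' psiabs[of n] by (metis abs_ge_self order_trans real_norm_def)
    qed
    obtain C2 where C2: "C2 > 0" "eventually (\<lambda>k. norm (norm (fourier_coeff f k) * ln \<bar>real_of_int k\<bar>) \<le> C2 * norm (\<psi> (nat \<bar>k\<bar>))) cofinite"
      using landau_o.bigE[of "\<lambda>n::int. norm (fourier_coeff f n) * ln \<bar>real_of_int n\<bar>"] H by blast
    define S where "S = {k. \<not> norm (norm (fourier_coeff f k) * ln \<bar>real_of_int k\<bar>) \<le> C2 * norm (\<psi> (nat \<bar>k\<bar>))}"
    have Sfin: "finite S" using C2(2) unfolding eventually_cofinite S_def .
    obtain M0 where M0: "\<forall>k\<in>S. \<bar>k\<bar> \<le> M0"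
    proof -
      have "bdd_above (abs ` S)" using Sfin by (intro bdd_above_finite) simp
      then show ?thesis using that unfolding bdd_above_def by auto
    qed
    define M where "M = max M0 0 + 1"
    have coef: "\<forall>k::int. \<bar>k\<bar> \<ge> M \<longrightarrow> norm (fourier_coeff f k) * ln \<bar>real_of_int k\<bar> \<le> C2 * \<psi> (nat \<bar>k\<bar>)"
    proof (intro allI impI)
      fix k :: int assume k: "\<bar>k\<bar> \<ge> M"
      then have "k \<notin> S" using M0 unfolding M_def by force
      then have "norm (norm (fourier_coeff f k) * ln \<bar>real_of_int k\<bar>) \<le> C2 * norm (\<psi> (nat \<bar>k\<bar>))" unfolding S_def by simp
      moreover have "nat \<bar>k\<bar> \<ge> 1" using k unfolding M_def by auto
      ultimately show "norm (fourier_coeff f k) * ln \<bar>real_of_int k\<bar> \<le> C2 * \<psi> (nat \<bar>k\<bar>)"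
        using psiabs by (metis abs_ge_self order_trans real_norm_def)
    qed
    define Cst where "Cst = 4 * C1 + 128 * C2 * ((1 + 2 * Kp) + (1 + 2 * Km))"
    have Cst: "Cst > 0" unfolding Cst_def using C1 C2 Kp Km by (intro add_pos_nonneg) auto
    show "(\<lambda>n. L_norm (\<lambda>x. f x - partial_sum f n x)) \<in> O(\<psi>)"
    proof (rule landau_o.bigI[OF Cst])
      show "eventually (\<lambda>n. norm (L_norm (\<lambda>x. f x - partial_sum f n x)) \<le> Cst * norm (\<psi> n)) at_top"
        unfolding eventually_at_top_linorder
      proof (intro exI allI impI)
        fix n assume n: "max N0 (max (nat M) 3) \<le> n"
        then have n': "n \<ge> N0" "int n \<ge> M" "n \<ge> 3" "n \<ge> 1" by auto
        have "norm (L_norm (\<lambda>x. f x - partial_sum f n x)) = L_norm (\<lambda>x. f x - partial_sum f n x)"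
          using L_norm_nonneg by simp
        also have "\<dots> \<le> Cst * \<psi> n" unfolding Cst_def
          by (rule err_from[OF fabs Kp(2,1) Km(2,1) E coef _ \<psi>_dec n'(1-3)]) (use C2 in simp)
        finally show "norm (L_norm (\<lambda>x. f x - partial_sum f n x)) \<le> Cst * norm (\<psi> n)"
          using psiabs[OF n'(4)] by simp
      qed
    qed
  qed
qed

end
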